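(* Assume the standing assumptions, suppose $(D)$ has an optimal solution $p^*$ (a minimizer of $\theta$) with $\|p^*\|\le R$ for some $R>0$, assume $D_f>0$, let $\epsilon>0$, $\rho=\frac{\epsilon}{3D_f}$, $\kappa=\frac{2\epsilon}{3R^2}$, and let $(p_k)_{k\ge0}$ be generated by the fast gradient method applied to $\theta_{\rho,\kappa}$. Then for all $k\ge0$, $$\|\nabla\theta_\rho(p_k)\|=\|Ax_{f,p_k}-x_{g,p_k}\|\le 2\sqrt{L(\rho,\kappa)\Bigl(\theta(0)-\theta(p^* )+\frac\epsilon3\Bigr)}\,e^{-\frac k2\sqrt{\kappa/L(\rho,\kappa)}}+\frac{4\sqrt2\,\epsilon}{3R}.$$
   Context: Standing assumptions: $\mathcal{H}$ is a real Hilbert space; $f:\mathcal{H}\to\mathbb{R}\cup\{+\infty\}$ is proper, convex, lower semicontinuous with bounded effective domain; $g:\mathbb{R}^m\to\mathbb{R}\cup\{+\infty\}$ is proper, lower semicontinuous and $\mu$-strongly convex for some $\mu>0$; $A:\mathcal{H}\to\mathbb{R}^m$ is linear and continuous with $A(\operatorname{dom} f)\cap\operatorname{dom} g\neq\emptyset$. $(D)$ is $\sup_{p}\{-f^*(A^*p)-g^*(-p)\}$. $D_f:=\sup\{\tfrac12\|x\|^2:x\in\operatorname{dom} f\}$. $\theta(p):=f^*(A^*p)+g^*(-p)$. For $\rho>0$, $f_\rho^*(q):=\sup_{x\in\mathcal{H}}\{\langle q,x\rangle-f(x)-\frac\rho2\|x\|^2\}$; $x_{f,p}$ is the unique maximizer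 in the definition of $f_\rho^*(A^*p)$; $x_{g,p}:=\nabla g^*(-p)$, the unique minimizer of $x\mapsto\langle p,x\rangle+g(x)$ on $\mathbb{R}^m$. $\theta_\rho(p):=f_\rho^*(A^*p)+g^*(-p)$, whose gradient is $Ax_{f,p}-x_{g,p}$; $\theta_{\rho,\kappa}(p):=\theta_\rho(p)+\frac\kappa2\|p\|^2$; $L(\rho,\kappa):=\frac{\|A\|^2}{\rho}+\frac1\mu+\kappa$. The fast gradient method applied to $\theta_{\rho,\kappa}$ is: $w_0=p_0=0$ and for $k\ge0$, $p_{k+1}=w_k-\frac{1}{L(\rho,\kappa)}\nabla\theta_{\rho,\kappa}(w_k)$, $w_{k+1}=p_{k+1}+\frac{\sqrt{L(\rho,\kappa)}-\sqrt\kappa}{\sqrt{L(\rho,\kappa)}+\sqrt\kappa}(p_{k+1}-p_k)$. *)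

theory Defs
  imports "HOL-Analysis.Analysis"
begin

text \<open>Extended-real-valued functions: values in real \<union> {+\<infinity>} are modelled as ereal.\<close>

definition proper_fun :: "('a \<Rightarrow> ereal) \<Rightarrow> bool" where
  "proper_fun f \<longleftrightarrow> (\<forall>x. f x \<noteq> -\<infinity>) \<and> (\<exists>x. f x \<noteq> \<infinity>)"

definition edom :: "('a \<Rightarrow> ereal) \<Rightarrow> 'a set" where
  "edom f = {x. f x < \<infinity>}"

definition convex_fun :: "('a::real_vector \<Rightarrow> ereal) \<Rightarrow> bool" where
  "convex_fun f \<longleftrightarrow> (\<forall>x y. \<forall>t\<in>{0<..<1::real}.
      f (t *\<^sub>R x + (1 - t) *\<^sub>R y) \<le> ereal t * f x + ereal (1 - t) * f y)"

definition strongly_convex_fun :: "real \<Rightarrow> ('a::real_normed_vector \<Rightarrow> ereal) \<Rightarrow> bool" where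
  "strongly_convex_fun \<mu> f \<longleftrightarrow> (\<forall>x y. \<forall>t\<in>{0<..<1::real}.
      f (t *\<^sub>R x + (1 - t) *\<^sub>R y) \<le> ereal t * f x + ereal (1 - t) * f y
          - ereal (\<mu> / 2 * t * (1 - t) * (norm (x - y))\<^sup>2))"

definition lsc_fun :: "('a::topological_space \<Rightarrow> ereal) \<Rightarrow> bool" where
  "lsc_fun f \<longleftrightarrow> (\<forall>c. closed {x. f x \<le> ereal c})"

definition fconj :: "('a::real_inner \<Rightarrow> ereal) \<Rightarrow> 'a \<Rightarrow> ereal" where
  "fconj f q = (SUP x. ereal (inner q x) - f x)"

definition fconj_reg :: "real \<Rightarrow> ('a::real_inner \<Rightarrow> ereal) \<Rightarrow> 'a \<Rightarrow> ereal" where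
  "fconj_reg \<rho> f q = (SUP x. ereal (inner q x - \<rho> / 2 * (norm x)\<^sup>2) - f x)"

definition xf :: "real \<Rightarrow> ('a::real_inner \<Rightarrow> ereal) \<Rightarrow> ('m \<Rightarrow> 'a) \<Rightarrow> 'm \<Rightarrow> 'a" where
  "xf \<rho> f Astar p = (THE x. \<forall>y.
      ereal (inner (Astar p) y - \<rho> / 2 * (norm y)\<^sup>2) - f y
        \<le> ereal (inner (Astar p) x - \<rho> / 2 * (norm x)\<^sup>2) - f x)"

definition xg :: "('b::real_inner \<Rightarrow> ereal) \<Rightarrow> 'b \<Rightarrow> 'b" where
  "xg g p = (THE x. \<forall>y. ereal (inner p x) + g x \<le> ereal (inner p y) + g y)"

definition Dconst :: "('a::real_normed_vector \<Rightarrow> ereal) \<Rightarrow> real" where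
  "Dconst f = Sup ((\<lambda>x. (norm x)\<^sup>2 / 2) ` edom f)"

definition theta :: "('a::real_inner \<Rightarrow> ereal) \<Rightarrow> ('b::real_inner \<Rightarrow> ereal) \<Rightarrow> ('b \<Rightarrow> 'a) \<Rightarrow> 'b \<Rightarrow> ereal" where
  "theta f g Astar p = fconj f (Astar p) + fconj g (- p)"

definition Lconst :: "real \<Rightarrow> real \<Rightarrow> real \<Rightarrow> real \<Rightarrow> real" where
  "Lconst nA \<mu> \<rho> \<kappa> = nA\<^sup>2 / \<rho> + 1 / \<mu> + \<kappa>"

end

theory Submission
  imports Defs
begin

definition scvx :: "real \<Rightarrow> ('a::real_normed_vector \<Rightarrow> ereal) \<Rightarrow> bool" where
 "scvx c F \<longleftrightarrow> (\<forall>x. F x \<noteq> -\<infinity>) \<and> (\<forall>x y (t::real). F x \<noteq> \<infinity> \<longrightarrow> F y \<noteq> \<infinity> \<longrightarrow> 0<t \<longrightarrow> t<1 \<longrightarrow>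
    F (t *\<^sub>R x + (1-t) *\<^sub>R y) \<le> ereal (t * real_of_ereal (F x) + (1-t) * real_of_ereal (F y)
        - c/2*t*(1-t)*(norm(x-y))\<^sup>2))"

lemma scvx_D:
  assumes "scvx c F" "F x = ereal a" "F y = ereal b" "0 < t" "t < 1"
  shows "F (t *\<^sub>R x + (1-t) *\<^sub>R y) \<le> ereal (t * a + (1-t) * b - c/2*t*(1-t)*(norm(x-y))\<^sup>2)"
proof -
  have H: "\<And>x y t. F x \<noteq> \<infinity> \<Longrightarrow> F y \<noteq> \<infinity> \<Longrightarrow> 0<t \<Longrightarrow> t<1 \<Longrightarrow> F (t *\<^sub>R x + (1-t) *\<^sub>R y) \<le> ereal (t * real_of_ereal (F x) + (1-t) * real_of_ereal (F y)
        - c/2*t*(1-t)*(norm(x-y))\<^sup>2)" using assms(1) unfolding scvx_def by blast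
  show ?thesis using H[of x y t] assms by simp
qed

lemma scvx_nm: "scvx c F \<Longrightarrow> F x \<noteq> -\<infinity>" unfolding scvx_def by simp

lemma scvx_conv: "convex_fun f \<Longrightarrow> proper_fun f \<Longrightarrow> scvx 0 f"
  unfolding scvx_def convex_fun_def proper_fun_def
proof (intro conjI allI impI)
  fix x y and t :: real assume c: "\<forall>x y. \<forall>t\<in>{0<..<1::real}. f (t *\<^sub>R x + (1 - t) *\<^sub>R y) \<le> ereal t * f x + ereal (1 - t) * f y"
    and p: "(\<forall>x. f x \<noteq> - \<infinity>) \<and> (\<exists>x. f x \<noteq> \<infinity>)" and fx: "f x \<noteq> \<infinity>" and fy: "f y \<noteq> \<infinity>" and t: "0 < t" "t < 1"
  obtain a b where "f x = ereal a" "f y = ereal b" using fx fy p by (metis ereal_cases)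
  moreover have "f (t *\<^sub>R x + (1 - t) *\<^sub>R y) \<le> ereal t * f x + ereal (1 - t) * f y" using c t by auto
  ultimately show "f (t *\<^sub>R x + (1 - t) *\<^sub>R y) \<le> ereal (t * real_of_ereal (f x) + (1 - t) * real_of_ereal (f y) - 0 / 2 * t * (1 - t) * (norm (x - y))\<^sup>2)"
    by simp
qed auto

lemma scvx_sconv: "strongly_convex_fun \<mu> f \<Longrightarrow> proper_fun f \<Longrightarrow> scvx \<mu> f"
  unfolding scvx_def strongly_convex_fun_def proper_fun_def
proof (intro conjI allI impI)
  fix x y and t :: real assume c: "\<forall>x y. \<forall>t\<in>{0<..<1::real}. f (t *\<^sub>R x + (1 - t) *\<^sub>R y) \<le> ereal t * f x + ereal (1 - t) * f y
          - ereal (\<mu> / 2 * t * (1 - t) * (norm (x - y))\<^sup>2)"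
    and p: "(\<forall>x. f x \<noteq> - \<infinity>) \<and> (\<exists>x. f x \<noteq> \<infinity>)" and fx: "f x \<noteq> \<infinity>" and fy: "f y \<noteq> \<infinity>" and t: "0 < t" "t < 1"
  obtain a b where "f x = ereal a" "f y = ereal b" using fx fy p by (metis ereal_cases)
  moreover have "f (t *\<^sub>R x + (1 - t) *\<^sub>R y) \<le> ereal t * f x + ereal (1 - t) * f y
          - ereal (\<mu> / 2 * t * (1 - t) * (norm (x - y))\<^sup>2)" using c t by auto
  ultimately show "f (t *\<^sub>R x + (1 - t) *\<^sub>R y) \<le> ereal (t * real_of_ereal (f x) + (1 - t) * real_of_ereal (f y) - \<mu> / 2 * t * (1 - t) * (norm (x - y))\<^sup>2)"
    by simp
qed auto

lemma norm_conv_id: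
  fixes x y :: "'a::real_inner"
  shows "(norm (t *\<^sub>R x + (1-t) *\<^sub>R y))\<^sup>2 = t*(norm x)\<^sup>2 + (1-t)*(norm y)\<^sup>2 - t*(1-t)*(norm (x-y))\<^sup>2"
  unfolding power2_norm_eq_inner by (simp add: inner_diff inner_add algebra_simps)

lemma scvx_add:
  fixes F :: "'a::real_normed_vector \<Rightarrow> ereal" and \<phi> :: "'a \<Rightarrow> real"
  assumes "scvx c F"
    and "\<And>x y t. 0<t \<Longrightarrow> t<1 \<Longrightarrow> \<phi>(t *\<^sub>R x + (1-t) *\<^sub>R y) \<le> t*\<phi> x + (1-t)*\<phi> y - d/2*t*(1-t)*(norm(x-y))\<^sup>2"
  shows "scvx (c+d) (\<lambda>x. F x + ereal (\<phi> x))"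
  unfolding scvx_def
proof (intro conjI allI impI)
  fix x show "F x + ereal (\<phi> x) \<noteq> - \<infinity>" using assms(1) unfolding scvx_def by simp
next
  fix x y and t :: real assume fx: "F x + ereal (\<phi> x) \<noteq> \<infinity>" and fy: "F y + ereal (\<phi> y) \<noteq> \<infinity>" and t: "0<t" "t<1"
  have nm: "\<And>x. F x \<noteq> -\<infinity>" using assms(1) unfolding scvx_def by simp
  obtain a b where ab: "F x = ereal a" "F y = ereal b" using fx fy nm by (metis ereal_cases plus_ereal.simps(2))
  have "F (t *\<^sub>R x + (1-t) *\<^sub>R y) \<le> ereal (t * a + (1-t) * b - c/2*t*(1-t)*(norm(x-y))\<^sup>2)"
    using scvx_D[OF assms(1) ab t] .
  moreover have "\<phi>(t *\<^sub>R x + (1-t) *\<^sub>R y) \<le> t*\<phi> x + (1-t)*\<phi> y - d/2*t*(1-t)*(norm(x-y))\<^sup>2" using assms(2) t .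
  ultimately have "F (t *\<^sub>R x + (1-t) *\<^sub>R y) + ereal (\<phi>(t *\<^sub>R x + (1-t) *\<^sub>R y)) \<le>
     ereal (t * a + (1-t) * b - c/2*t*(1-t)*(norm(x-y))\<^sup>2) + ereal (t*\<phi> x + (1-t)*\<phi> y - d/2*t*(1-t)*(norm(x-y))\<^sup>2)"
    by (intro add_mono) auto
  also have "\<dots> = ereal (t * real_of_ereal (F x + ereal (\<phi> x)) + (1 - t) * real_of_ereal (F y + ereal (\<phi> y)) -
                  (c + d) / 2 * t * (1 - t) * (norm (x - y))\<^sup>2)"
    using ab by (simp add: field_simps)
  finally show "F (t *\<^sub>R x + (1 - t) *\<^sub>R y) + ereal (\<phi> (t *\<^sub>R x + (1 - t) *\<^sub>R y))
         \<le> ereal (t * real_of_ereal (F x + ereal (\<phi> x)) + (1 - t) * real_of_ereal (F y + ereal (\<phi> y)) -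
                  (c + d) / 2 * t * (1 - t) * (norm (x - y))\<^sup>2)" .
qed

lemma quad_sconv:
  fixes q :: "'a::real_inner" and t r k :: real
  shows "0<t \<Longrightarrow> t<1 \<Longrightarrow> (\<lambda>x. r/2*(norm x)\<^sup>2 + inner q x + k) (t *\<^sub>R x + (1-t) *\<^sub>R y) \<le>
     t*(\<lambda>x. r/2*(norm x)\<^sup>2 + inner q x + k) x + (1-t)*(\<lambda>x. r/2*(norm x)\<^sup>2 + inner q x + k) y - r/2*t*(1-t)*(norm(x-y))\<^sup>2"
  by (simp only: norm_conv_id inner_add_right inner_scaleR_right) (simp add: field_simps)

lemma lsc_seq:
  fixes F :: "'a::real_normed_vector \<Rightarrow> ereal"
  assumes "lsc_fun F" "X \<longlonglongrightarrow> x" "\<And>n. F (X n) \<le> ereal (c n)" "c \<longlonglongrightarrow> c0"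
  shows "F x \<le> ereal c0"
proof -
  have le: "F x \<le> ereal (c0 + e)" if e: "e > 0" for e
  proof -
    have "eventually (\<lambda>n. c n < c0 + e) sequentially"
      using assms(4) e by (simp add: order_tendstoD(2))
    then have ev: "eventually (\<lambda>n. X n \<in> {x. F x \<le> ereal (c0+e)}) sequentially"
    proof (rule eventually_mono)
      fix n assume "c n < c0 + e"
      then have "ereal (c n) \<le> ereal (c0 + e)" by simp
      then show "X n \<in> {x. F x \<le> ereal (c0+e)}" using assms(3)[of n] order_trans by blast
    qed
    have cl: "closed {x. F x \<le> ereal (c0+e)}" using assms(1) unfolding lsc_fun_def by blast
    have "x \<in> {x. F x \<le> ereal (c0+e)}" by (rule Lim_in_closed_set[OF cl ev _ assms(2)]) simp
    then show ?thesis by simp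
  qed
  show ?thesis
  proof (cases "F x")
    case (real r)
    have "r \<le> c0" by (rule field_le_epsilon) (use le real in simp)
    then show ?thesis using real by simp
  next
    case PInf then show ?thesis using le[of 1] by simp
  qed simp
qed

lemma lsc_add:
  fixes F :: "'a::real_normed_vector \<Rightarrow> ereal"
    and \<phi> :: "'a \<Rightarrow> real"
  assumes "lsc_fun F" "continuous_on UNIV \<phi>" "\<And>x. F x \<noteq> -\<infinity>"
  shows "lsc_fun (\<lambda>x. F x + ereal (\<phi> x))"
  unfolding lsc_fun_def closed_sequential_limits
proof (intro allI impI, elim conjE)
  fix c :: real and X and x assume X: "\<forall>n. X n \<in> {x. F x + ereal (\<phi> x) \<le> ereal c}" and lim: "X \<longlonglongrightarrow> x"
  have "isCont \<phi> x" using assms(2) by (simp add: continuous_on_eq_continuous_at)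
  then have "(\<lambda>n. \<phi> (X n)) \<longlonglongrightarrow> \<phi> x" using isCont_tendsto_compose lim by blast
  then have l2: "(\<lambda>n. c - \<phi> (X n)) \<longlonglongrightarrow> c - \<phi> x" by (intro tendsto_intros)
  have "F (X n) \<le> ereal (c - \<phi> (X n))" for n
  proof -
    have "F (X n) + ereal (\<phi> (X n)) \<le> ereal c" using X by auto
    then show ?thesis using assms(3)[of "X n"] by (cases "F (X n)") auto
  qed
  then have "F x \<le> ereal (c - \<phi> x)" using lsc_seq[OF assms(1) lim _ l2] by blast
  then show "x \<in> {x. F x + ereal (\<phi> x) \<le> ereal c}" using assms(3)[of x] by (cases "F x") auto
qed

lemma small_t:
  fixes u v :: real
  assumes "\<And>t. 0 < t \<Longrightarrow> t < 1 \<Longrightarrow> u \<le> t * v"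
  shows "u \<le> 0"
proof (rule ccontr)
  assume "\<not> u \<le> 0"
  then have u: "u > 0" by simp
  have "u \<le> 1/2 * v" using assms[of "1/2"] by simp
  then have v: "v > 0" using u by simp
  define t0 :: real where "t0 = min (1/2) (u / (2 * v))"
  have t: "0 < t0" "t0 < 1" using u v by (auto simp: t0_def)
  have "t0 * v \<le> u/(2 * v) * v" unfolding t0_def by (intro mult_right_mono) (use v in auto)
  also have "\<dots> = u/2" using v by simp
  finally show False using assms[OF t] u by simp
qed

lemma min0:
  fixes F :: "'a::{real_normed_vector,complete_space} \<Rightarrow> ereal"
  assumes sc: "scvx c F" and c: "c > 0" and lsc: "lsc_fun F" and x0: "F x0 \<noteq> \<infinity>" and bb: "\<And>x. ereal b \<le> F x"
  shows "\<exists>x. F x \<noteq> \<infinity> \<and> (\<forall>y. F x \<le> F y)"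
proof -
  have nm: "\<And>x. F x \<noteq> -\<infinity>" using scvx_nm[OF sc] .
  define S where "S = {real_of_ereal (F x) | x. F x \<noteq> \<infinity>}"
  have Sne: "S \<noteq> {}" using x0 by (auto simp: S_def)
  have Sb: "\<And>s. s \<in> S \<Longrightarrow> b \<le> s"
  proof -
    fix s assume "s \<in> S" then obtain x where "s = real_of_ereal (F x)" "F x \<noteq> \<infinity>" by (auto simp: S_def)
    then show "b \<le> s" using bb[of x] nm[of x] by (cases "F x") auto
  qed
  then have bdd: "bdd_below S" by (rule bdd_belowI)
  define m where "m = Inf S"
  have mle: "\<And>x. F x \<noteq> \<infinity> \<Longrightarrow> m \<le> real_of_ereal (F x)"
    unfolding m_def by (rule cInf_lower[OF _ bdd]) (auto simp: S_def)
  have "\<forall>n. \<exists>x. F x \<noteq> \<infinity> \<and> real_of_ereal (F x) < m + 1/(real n + 1)"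
  proof
    fix n :: nat
    have "Inf S < m + 1/(real n+1)" unfolding m_def by (simp add: add_pos_pos)
    then obtain s where "s \<in> S" "s < m + 1/(real n+1)" using cInf_lessD[OF Sne] by blast
    then show "\<exists>x. F x \<noteq> \<infinity> \<and> real_of_ereal (F x) < m + 1/(real n + 1)" by (auto simp: S_def)
  qed
  then obtain X where X: "\<And>n. F (X n) \<noteq> \<infinity>" "\<And>n. real_of_ereal (F (X n)) < m + 1/(real n + 1)"
    by metis
  have key: "(norm (X n - X k))\<^sup>2 \<le> 4/c * (1/(real n+1) + 1/(real k+1))" for n k
  proof -
    obtain a1 where a1: "F (X n) = ereal a1" using X(1)[of n] nm[of "X n"] by (cases "F (X n)") auto
    obtain a2 where a2: "F (X k) = ereal a2" using X(1)[of k] nm[of "X k"] by (cases "F (X k)") auto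
    have h: "F ((1/2) *\<^sub>R X n + (1-1/2) *\<^sub>R X k) \<le> ereal ((1/2) * a1 + (1-1/2) * a2 - c/2*(1/2)*(1-1/2)*(norm(X n - X k))\<^sup>2)"
      by (rule scvx_D[OF sc a1 a2]) auto
    then have fin: "F ((1/2) *\<^sub>R X n + (1-1/2) *\<^sub>R X k) \<noteq> \<infinity>" by auto
    have "m \<le> real_of_ereal (F ((1/2) *\<^sub>R X n + (1-1/2) *\<^sub>R X k))" using mle[OF fin] .
    also have "\<dots> \<le> (1/2) * a1 + (1-1/2) * a2 - c/2*(1/2)*(1-1/2)*(norm(X n - X k))\<^sup>2"
      using h nm[of "(1/2) *\<^sub>R X n + (1-1/2) *\<^sub>R X k"] by (cases "F ((1/2) *\<^sub>R X n + (1-1/2) *\<^sub>R X k)") auto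
    finally have "m \<le> (1/2) * a1 + (1/2) * a2 - c/8*(norm(X n - X k))\<^sup>2" by simp
    moreover have "a1 < m + 1/(real n + 1)" "a2 < m + 1/(real k + 1)" using X(2)[of n] X(2)[of k] a1 a2 by auto
    ultimately have "c/8 * (norm(X n - X k))\<^sup>2 \<le> (1/(real n+1) + 1/(real k+1))/2" by argo
    then have "c * (norm(X n - X k))\<^sup>2 \<le> 4 * (1/(real n+1) + 1/(real k+1))" by simp
    then have "(norm(X n - X k))\<^sup>2 \<le> (4 * (1/(real n+1) + 1/(real k+1))) / c"
      using c by (subst pos_le_divide_eq) (auto simp: mult.commute)
    then show ?thesis by simp
  qed
  have "Cauchy X"
    unfolding Cauchy_def
  proof (intro allI impI)
    fix e :: real assume e: "e > 0"
    obtain M :: nat where M: "8/(c*e\<^sup>2) < real M" using reals_Archimedean2 by blast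
    have Mp: "8/(c*e\<^sup>2) < real M + 1" using M by simp
    have "\<forall>n\<ge>M. \<forall>k\<ge>M. dist (X n) (X k) < e"
    proof (intro allI impI)
      fix n k assume nk: "n \<ge> M" "k \<ge> M"
      have "1/(real n+1) \<le> 1/(real M+1)" "1/(real k+1) \<le> 1/(real M+1)" using nk by (auto simp: field_simps)
      then have "4/c * (1/(real n+1) + 1/(real k+1)) \<le> 4/c * (2/(real M+1))"
        using c by (intro mult_left_mono) auto
      then have "(norm (X n - X k))\<^sup>2 \<le> 4/c * (2/(real M+1))" using key[of n k] by linarith
      also have "\<dots> < e\<^sup>2"
      proof -
        have cM: "0 < c * (real M + 1)" using c by simp
        have "8 < e\<^sup>2 * (c * (real M + 1))" using Mp c e by (simp add: pos_divide_less_eq mult_ac)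
        then have "8 / (c * (real M + 1)) < e\<^sup>2" using cM by (simp add: pos_divide_less_eq)
        moreover have "4/c * (2/(real M+1)) = 8 / (c * (real M + 1))" by simp
        ultimately show ?thesis by simp
      qed
      finally have "(norm (X n - X k))\<^sup>2 < e\<^sup>2" .
      then have "norm (X n - X k) < e" using e by (simp add: power_less_imp_less_base)
      then show "dist (X n) (X k) < e" by (simp add: dist_norm)
    qed
    then show "\<exists>M. \<forall>m\<ge>M. \<forall>n\<ge>M. dist (X m) (X n) < e" by blast
  qed
  then obtain x where lim: "X \<longlonglongrightarrow> x" using Cauchy_convergent_iff convergent_def by blast
  have bnd: "F x \<le> ereal (m + 1/(real N + 1))" for N
  proof (rule lsc_seq[OF lsc LIMSEQ_ignore_initial_segment[OF lim, of N]])
    fix n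
    have "real_of_ereal (F (X (n+N))) < m + 1/(real (n+N) + 1)" using X(2) .
    also have "\<dots> \<le> m + 1/(real N + 1)" by (auto simp: field_simps)
    finally show "F (X (n + N)) \<le> ereal (m + 1 / (real N + 1))" using X(1)[of "n+N"] nm[of "X (n+N)"]
      by (cases "F (X (n+N))") auto
  qed auto
  have fin: "F x \<noteq> \<infinity>" using bnd[of 0] by auto
  then obtain r where r: "F x = ereal r" using nm[of x] by (cases "F x") auto
  have "r \<le> m"
  proof (rule ccontr)
    assume "\<not> r \<le> m"
    then obtain N where "inverse (real (Suc N)) < r - m" using reals_Archimedean[of "r-m"] by auto
    then show False using bnd[of N] r by (simp add: field_simps)
  qed
  have "\<forall>y. F x \<le> F y"
  proof
    fix y show "F x \<le> F y"
    proof (cases "F y = \<infinity>")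
      case False
      then show ?thesis using mle[OF False] \<open>r \<le> m\<close> r nm[of y] by (cases "F y") auto
    qed simp
  qed
  then show ?thesis using fin by blast
qed

lemma qg:
  fixes F :: "'a::real_normed_vector \<Rightarrow> ereal"
  assumes sc: "scvx c F" and a: "F x0 = ereal a" and mn: "\<And>y. F x0 \<le> F y"
  shows "ereal (a + c/2 * (norm (y - x0))\<^sup>2) \<le> F y"
proof (cases "F y")
  case (real b)
  have "a + c/2 * (norm (y - x0))\<^sup>2 - b \<le> 0"
  proof (rule small_t)
    fix t :: real assume t: "0 < t" "t < 1"
    have "F x0 \<le> F (t *\<^sub>R y + (1-t) *\<^sub>R x0)" by (rule mn)
    also have "\<dots> \<le> ereal (t * b + (1-t) * a - c/2*t*(1-t)*(norm(y - x0))\<^sup>2)" by (rule scvx_D[OF sc real a t])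
    finally have "a \<le> t * b + (1-t) * a - c/2*t*(1-t)*(norm(y - x0))\<^sup>2" using a by simp
    then have "t * (a + c/2 * (norm (y - x0))\<^sup>2 - b) \<le> t * (t * (c/2*(norm(y - x0))\<^sup>2))"
      by (simp add: field_simps)
    then show "a + c/2 * (norm (y - x0))\<^sup>2 - b \<le> t * (c/2*(norm(y - x0))\<^sup>2)" using t by simp
  qed
  then show ?thesis using real by simp
next
  case MInf then show ?thesis using scvx_nm[OF sc] by simp
qed simp

lemma proj:
  fixes C :: "'b::{real_inner,complete_space} set"
  assumes cl: "closed C" and cv: "convex C" and ne: "w0 \<in> C"
  shows "\<exists>y\<in>C. \<forall>w\<in>C. inner (z - y) (w - y) \<le> 0"
proof -
  define F where "F = (\<lambda>x. if x \<in> C then ereal ((norm (z - x))\<^sup>2) else \<infinity>)"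
  have sc: "scvx 2 F" unfolding scvx_def
  proof (intro conjI allI impI)
    fix x show "F x \<noteq> -\<infinity>" by (simp add: F_def)
  next
    fix x y and t :: real assume fx: "F x \<noteq> \<infinity>" and fy: "F y \<noteq> \<infinity>" and t: "0 < t" "t < 1"
    have xy: "x \<in> C" "y \<in> C" using fx fy by (auto simp: F_def split: if_splits)
    have m: "t *\<^sub>R x + (1-t) *\<^sub>R y \<in> C" using convexD[OF cv xy, of t "1-t"] t by simp
    have e: "z - (t *\<^sub>R x + (1-t) *\<^sub>R y) = t *\<^sub>R (z - x) + (1-t) *\<^sub>R (z - y)" by (simp add: algebra_simps)
    have "(norm (z - (t *\<^sub>R x + (1-t) *\<^sub>R y)))\<^sup>2 = t*(norm (z-x))\<^sup>2 + (1-t)*(norm (z-y))\<^sup>2 - t*(1-t)*(norm((z-x)-(z-y)))\<^sup>2"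
      unfolding e by (rule norm_conv_id)
    also have "(z-x)-(z-y) = -(x - y)" by simp
    finally show "F (t *\<^sub>R x + (1 - t) *\<^sub>R y) \<le> ereal (t * real_of_ereal (F x) + (1 - t) * real_of_ereal (F y) - 2 / 2 * t * (1 - t) * (norm (x - y))\<^sup>2)"
      using xy m by (simp add: F_def norm_minus_commute)
  qed
  have lsc: "lsc_fun F" unfolding lsc_fun_def
  proof
    fix c :: real
    have "{x. F x \<le> ereal c} = C \<inter> {x. (norm (z - x))\<^sup>2 \<le> c}" by (auto simp: F_def)
    moreover have "closed {x. (norm (z - x))\<^sup>2 \<le> c}"
      by (intro closed_Collect_le continuous_intros)
    ultimately show "closed {x. F x \<le> ereal c}" using cl by auto
  qed
  have "\<exists>x. F x \<noteq> \<infinity> \<and> (\<forall>y. F x \<le> F y)"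
    by (rule min0[OF sc _ lsc, of w0 0]) (use ne in \<open>auto simp: F_def\<close>)
  then obtain y where y: "F y \<noteq> \<infinity>" "\<And>w. F y \<le> F w" by blast
  have yC: "y \<in> C" using y(1) by (auto simp: F_def split: if_splits)
  have "\<forall>w\<in>C. inner (z - y) (w - y) \<le> 0"
  proof
    fix w assume w: "w \<in> C"
    have "inner (z - y) (w - y) - 0 \<le> 0"
    proof (rule small_t)
      fix t :: real assume t: "0 < t" "t < 1"
      have "(1-t) *\<^sub>R y + (1-(1-t)) *\<^sub>R w \<in> C" using convexD[OF cv yC w, of "1-t" "1-(1-t)"] t by simp
      moreover have "(1-t) *\<^sub>R y + (1-(1-t)) *\<^sub>R w = y + t *\<^sub>R (w - y)" by (simp add: algebra_simps)
      ultimately have mC: "y + t *\<^sub>R (w - y) \<in> C" by simp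
      have "F y \<le> F (y + t *\<^sub>R (w - y))" by (rule y(2))
      then have "(norm (z - y))\<^sup>2 \<le> (norm (z - y - t *\<^sub>R (w - y)))\<^sup>2" using mC yC by (simp add: F_def diff_diff_eq2 algebra_simps)
      also have "\<dots> = (norm (z - y))\<^sup>2 - 2 * t * inner (z - y) (w - y) + t\<^sup>2 * (norm (w - y))\<^sup>2"
        unfolding power2_norm_eq_inner by (simp add: inner_diff inner_commute power2_eq_square algebra_simps)
      finally have "2 * t * inner (z - y) (w - y) \<le> t * (t * (norm (w - y))\<^sup>2)" by (simp add: power2_eq_square)
      then have "t * (2 * inner (z - y) (w - y)) \<le> t * (t * (norm (w - y))\<^sup>2)" by simp
      then have "2 * inner (z - y) (w - y) \<le> t * (norm (w - y))\<^sup>2" using t by simp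
      then show "inner (z - y) (w - y) - 0 \<le> t * ((norm (w - y))\<^sup>2 / 2)" by simp
    qed
    then show "inner (z - y) (w - y) \<le> 0" by simp
  qed
  then show ?thesis using yC by blast
qed

lemma aff_min:
  fixes F :: "'a::{real_inner,complete_space} \<Rightarrow> ereal"
  assumes sc: "scvx c F" and c: "c \<ge> 0" and lsc: "lsc_fun F" and x0: "F x0 = ereal f0"
  shows "\<exists>u a. \<forall>x. ereal (a + inner u x) \<le> F x"
proof -
  have nm: "\<And>x. F x \<noteq> -\<infinity>" using scvx_nm[OF sc] .
  define E where "E = {(x, t::real). F x \<le> ereal t}"
  have clE: "closed E" unfolding closed_sequential_limits
  proof (intro allI impI, elim conjE)
    fix Z and l :: "'a \<times> real" assume Z: "\<forall>n. Z n \<in> E" and lim: "Z \<longlonglongrightarrow> l"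
    have l1: "(\<lambda>n. fst (Z n)) \<longlonglongrightarrow> fst l" "(\<lambda>n. snd (Z n)) \<longlonglongrightarrow> snd l"
      using lim by (auto intro: tendsto_fst tendsto_snd)
    have "F (fst (Z n)) \<le> ereal (snd (Z n))" for n
    proof -
      have "Z n \<in> E" using Z by blast
      then show ?thesis by (cases "Z n") (simp add: E_def)
    qed
    then have "F (fst l) \<le> ereal (snd l)" by (rule lsc_seq[OF lsc l1(1) _ l1(2)])
    then show "l \<in> E" by (cases l) (auto simp: E_def)
  qed
  have cvE: "convex E" unfolding convex_def
  proof (intro ballI allI impI)
    fix p1 p2 :: "'a \<times> real" and u v :: real
    assume p: "p1 \<in> E" "p2 \<in> E" and uv: "0 \<le> u" "0 \<le> v" "u + v = 1"
    obtain x s y r where pp: "p1 = (x, s)" "p2 = (y, r)" by (cases p1, cases p2)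
    have xs: "F x \<le> ereal s" and yr: "F y \<le> ereal r" using p pp by (auto simp: E_def)
    show "u *\<^sub>R p1 + v *\<^sub>R p2 \<in> E"
    proof (cases "u = 0 \<or> v = 0")
      case True then show ?thesis using uv p by auto
    next
      case False
      then have t: "0 < u" "u < 1" and v: "v = 1 - u" using uv by auto
      obtain a b where ab: "F x = ereal a" "F y = ereal b" using xs yr nm[of x] nm[of y]
        by (cases "F x"; cases "F y") auto
      have "a \<le> s" "b \<le> r" using xs yr ab by auto
      have "F (u *\<^sub>R x + (1-u) *\<^sub>R y) \<le> ereal (u * a + (1-u) * b - c/2*u*(1-u)*(norm(x-y))\<^sup>2)"
        by (rule scvx_D[OF sc ab t])
      also have "\<dots> \<le> ereal (u * s + (1-u) * r)"
      proof -
        have "u * a \<le> u * s" "(1-u) * b \<le> (1-u) * r" using \<open>a \<le> s\<close> \<open>b \<le> r\<close> t by (auto intro: mult_left_mono)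
        moreover have "0 \<le> c/2*u*(1-u)*(norm(x-y))\<^sup>2" using c t by simp
        ultimately show ?thesis by simp
      qed
      finally show ?thesis using pp v by (simp add: E_def)
    qed
  qed
  have z: "(x0, f0 - 1) \<notin> E" using x0 by (simp add: E_def)
  have "(x0, f0) \<in> E" using x0 by (simp add: E_def)
  then obtain yt where yt: "yt \<in> E" "\<And>w. w \<in> E \<Longrightarrow> inner ((x0, f0 - 1) - yt) (w - yt) \<le> 0"
    using proj[OF clE cvE, of "(x0, f0)" "(x0, f0 - 1)"] by blast
  obtain y \<tau> where yt': "yt = (y, \<tau>)" by (cases yt)
  have Fy: "F y \<le> ereal \<tau>" using yt(1) yt' by (simp add: E_def)
  define s where "s = f0 - 1 - \<tau>"
  have ineq: "inner (x0 - y) (x - y) + s * (t - \<tau>) \<le> 0" if "F x \<le> ereal t" for x t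
    using yt(2)[of "(x, t)"] that yt' by (simp add: E_def s_def)
  have "s \<le> 0" using ineq[of y "\<tau> + 1"] Fy by (simp add: order_trans)
  moreover have "s \<noteq> 0"
  proof
    assume s0: "s = 0"
    have "inner (x0 - y) (x0 - y) \<le> 0" using ineq[of x0 f0] x0 s0 by simp
    then have "inner (x0 - y) (x0 - y) = 0" using inner_ge_zero[of "x0 - y"] by linarith
    then have "x0 = y" by simp
    then show False using Fy x0 s0 by (simp add: s_def)
  qed
  ultimately have sn: "s < 0" by simp
  define u where "u = (1 / (- s)) *\<^sub>R (x0 - y)"
  define a where "a = \<tau> - inner (x0 - y) y / (- s)"
  have "ereal (a + inner u x) \<le> F x" for x
  proof (cases "F x")
    case (real r)
    have "inner (x0 - y) (x - y) + s * (r - \<tau>) \<le> 0" using ineq[of x r] real by simp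
    then have "inner (x0 - y) (x - y) \<le> (- s) * (r - \<tau>)" by simp
    then have "inner (x0 - y) (x - y) \<le> (r - \<tau>) * (- s)" by (simp add: mult.commute)
    then have "inner (x0 - y) (x - y) / (- s) \<le> r - \<tau>" using pos_divide_le_eq[of "-s"] sn by simp
    moreover have "a + inner u x = \<tau> + inner (x0 - y) (x - y) / (- s)"
      unfolding a_def u_def by (simp add: inner_diff_right diff_divide_distrib)
    ultimately show ?thesis using real by simp
  qed (use nm in auto)
  then show ?thesis by blast
qed

lemma min_ex:
  fixes F :: "'a::{real_inner,complete_space} \<Rightarrow> ereal"
  assumes sc: "scvx c F" and c: "c > 0" and lsc: "lsc_fun F" and x0: "F x0 = ereal f0"
  shows "\<exists>x. F x \<noteq> \<infinity> \<and> (\<forall>y. F x \<le> F y)"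
proof -
  have nm: "\<And>x. F x \<noteq> -\<infinity>" using scvx_nm[OF sc] .
  obtain u a where aff: "\<And>x. ereal (a + inner u x) \<le> F x" using aff_min[OF sc _ lsc x0] c by fastforce
  define B where "B = 2*a + 2 * inner u x0 - f0 - (norm u)\<^sup>2 / c"
  have "ereal B \<le> F x" for x
  proof (cases "F x")
    case (real r)
    define mid where "mid = (1/2) *\<^sub>R x + (1 - 1/2) *\<^sub>R x0"
    define d where "d = norm (x - x0)"
    have "F mid \<le> ereal ((1/2) * r + (1-1/2) * f0 - c/2*(1/2)*(1-1/2)*(norm(x - x0))\<^sup>2)"
      unfolding mid_def by (rule scvx_D[OF sc real x0]) auto
    from order_trans[OF aff[of mid] this]
    have "a + inner u mid \<le> (1/2) * r + (1/2) * f0 - c/8*d\<^sup>2"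
      unfolding d_def by simp
    moreover have "inner u mid = inner u x0 + inner u (x - x0) / 2"
      unfolding mid_def by (simp add: inner_add_right inner_diff_right field_simps)
    moreover have "- (norm u * d) \<le> inner u (x - x0)"
      unfolding d_def using Cauchy_Schwarz_ineq2[of u "x - x0"] by linarith
    moreover have "norm u * d \<le> c/4*d\<^sup>2 + (norm u)\<^sup>2 / c"
    proof -
      have "0 \<le> (c*d/2 - norm u)\<^sup>2" by simp
      then have "c * (norm u * d) \<le> c * (c/4*d\<^sup>2) + (norm u)\<^sup>2" by (simp add: power2_eq_square algebra_simps)
      then have "c * (norm u * d) \<le> c * (c/4*d\<^sup>2 + (norm u)\<^sup>2 / c)" using c by (simp add: distrib_left)
      then show ?thesis using c by simp
    qed
    ultimately have "B \<le> r" unfolding B_def by argo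
    then show ?thesis using real by simp
  qed (use nm in auto)
  then show ?thesis using min0[OF sc c lsc, of x0 B] x0 by auto
qed

lemma arith_step:
  fixes \<alpha> \<kappa> x1 px py pk N2L Ga A1 A2 Na U D1 :: real
  assumes "0 \<le> \<alpha>" "\<alpha> \<le> 1" "\<kappa> \<ge> 0" "x1 \<le> py - N2L" "\<alpha>*Ga = -(1-\<alpha>)*A1 - \<alpha>*A2"
    "Na \<le> (1-\<alpha>)*U + \<alpha>*D1" "py + A1 \<le> pk" "py + A2 + \<kappa>/2*D1 \<le> px"
  shows "x1 - px + (\<kappa>/2*Na - \<alpha>*Ga + N2L) \<le> (1-\<alpha>)*(pk - px + \<kappa>/2*U)"
proof -
  have h1: "\<kappa>/2*Na \<le> \<kappa>/2*((1-\<alpha>)*U + \<alpha>*D1)" using assms by (intro mult_left_mono) auto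
  have h2: "(1-\<alpha>)*(py + A1) \<le> (1-\<alpha>)*pk" using assms by (intro mult_left_mono) auto
  have h3: "\<alpha>*(py + A2 + \<kappa>/2*D1) \<le> \<alpha>*px" using assms by (intro mult_left_mono) auto
  show ?thesis using h1 h2 h3 assms(4,5) by (simp add: algebra_simps) argo
qed

lemma cocoer:
  fixes F :: "'b::real_inner \<Rightarrow> real" and G :: "'b \<Rightarrow> 'b"
  assumes LF: "LF > 0"
    and lo: "\<And>x y. F x + inner (G x) (y - x) \<le> F y"
    and up: "\<And>x y. F y \<le> F x + inner (G x) (y - x) + LF/2 * (norm (y - x))\<^sup>2"
  shows "F x + inner (G x) (y - x) + (norm (G y - G x))\<^sup>2 / (2*LF) \<le> F y"
proof -
  define d where "d = G y - G x"
  define z where "z = y - (1/LF) *\<^sub>R d"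
  have u: "F z \<le> F y + inner (G y) (z - y) + LF/2 * (norm (z - y))\<^sup>2" by (rule up)
  have e1: "inner (G y) (z - y) = - (inner (G y) d / LF)" by (simp add: z_def)
  have e2: "LF/2 * (norm (z - y))\<^sup>2 = (norm d)\<^sup>2 / (2*LF)" using LF
    by (simp add: z_def power2_eq_square field_simps)
  have l: "F x + inner (G x) (z - x) \<le> F z" by (rule lo)
  have e3: "inner (G x) (z - x) = inner (G x) (y - x) - inner (G x) d / LF"
    by (simp add: z_def inner_diff_right)
  have e4: "inner (G y) d - inner (G x) d = (norm d)\<^sup>2" by (simp add: d_def power2_norm_eq_inner inner_diff_left)
  have e5: "inner (G y) d / LF - inner (G x) d / LF = (norm d)\<^sup>2 / LF"
    using e4 by (simp add: diff_divide_distrib[symmetric])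
  have e6: "(norm d)\<^sup>2 / LF - (norm d)\<^sup>2 / (2*LF) = (norm d)\<^sup>2 / (2*LF)" using LF by (simp add: field_simps)
  have "F x + inner (G x) (y - x) + (norm d)\<^sup>2 / (2*LF) \<le> F y"
    using u e1 e2 l e3 e5 e6 by linarith
  then show ?thesis by (simp add: d_def)
qed

lemma norm_sub_scale:
  fixes a g :: "'b::real_inner"
  shows "(norm (a - c *\<^sub>R g))\<^sup>2 = (norm a)\<^sup>2 - 2*c*inner g a + c\<^sup>2 * (norm g)\<^sup>2"
  unfolding power2_norm_eq_inner by (simp add: inner_diff inner_commute power2_eq_square algebra_simps)

lemma nest:
  fixes \<phi> :: "'b::real_inner \<Rightarrow> real" and gr :: "'b \<Rightarrow> 'b" and p w :: "nat \<Rightarrow> 'b"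
  assumes kp: "\<kappa> > 0" and kL: "\<kappa> < L"
    and lo: "\<And>x y. \<phi> x + inner (gr x) (y - x) + \<kappa>/2*(norm (y - x))\<^sup>2 \<le> \<phi> y"
    and up: "\<And>x y. \<phi> y \<le> \<phi> x + inner (gr x) (y - x) + L/2*(norm (y - x))\<^sup>2"
    and p0: "p 0 = 0" and w0: "w 0 = 0"
    and ps: "\<And>k. p (Suc k) = w k - (1/L) *\<^sub>R gr (w k)"
    and ws: "\<And>k. w (Suc k) = p (Suc k) + ((sqrt L - sqrt \<kappa>)/(sqrt L + sqrt \<kappa>)) *\<^sub>R (p (Suc k) - p k)"
  shows "\<phi> (p k) - \<phi> x \<le> (\<phi> 0 - \<phi> x + \<kappa>/2*(norm x)\<^sup>2) * (1 - sqrt (\<kappa>/L))^k"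
proof -
  have Lp: "L > 0" using kp kL by simp
  define \<alpha> where "\<alpha> = sqrt (\<kappa>/L)"
  have a0: "0 < \<alpha>" using kp Lp by (simp add: \<alpha>_def)
  have a1: "\<alpha> < 1" using kp kL Lp by (simp add: \<alpha>_def)
  have a2: "\<alpha>\<^sup>2 = \<kappa>/L" using kp Lp by (simp add: \<alpha>_def)
  have sk: "sqrt \<kappa> = \<alpha> * sqrt L" using kp Lp by (simp add: \<alpha>_def real_sqrt_divide)
  have sL: "sqrt L > 0" using Lp by simp
  have beta: "(sqrt L - sqrt \<kappa>)/(sqrt L + sqrt \<kappa>) = (1-\<alpha>)/(1+\<alpha>)"
  proof -
    have "(sqrt L - \<alpha> * sqrt L)/(sqrt L + \<alpha> * sqrt L) = (sqrt L * (1-\<alpha>))/(sqrt L * (1+\<alpha>))"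
      by (simp add: algebra_simps)
    also have "\<dots> = (1-\<alpha>)/(1+\<alpha>)" using sL by simp
    finally show ?thesis unfolding sk .
  qed
  have b1: "(1+\<alpha>) * ((1-\<alpha>)/(1+\<alpha>)) = 1 - \<alpha>" using a0 by simp
  have aL: "\<alpha>\<^sup>2/\<kappa> = 1/L" using a2 kp by simp
  define v where "v k = (1/\<alpha>) *\<^sub>R ((1+\<alpha>) *\<^sub>R w k - p k)" for k
  have av: "\<alpha> *\<^sub>R v k = (1+\<alpha>) *\<^sub>R w k - p k" for k using a0 by (simp add: v_def)
  have vstep: "v (Suc k) = (1-\<alpha>) *\<^sub>R v k + \<alpha> *\<^sub>R w k - (\<alpha>/\<kappa>) *\<^sub>R gr (w k)" for k
  proof -
    have "\<alpha> *\<^sub>R v (Suc k) = (1+\<alpha>) *\<^sub>R (p (Suc k) + ((1-\<alpha>)/(1+\<alpha>)) *\<^sub>R (p (Suc k) - p k)) - p (Suc k)"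
      using av ws beta by simp
    also have "\<dots> = p (Suc k) - (1-\<alpha>) *\<^sub>R p k"
    proof -
      have "(1+\<alpha>) *\<^sub>R (p (Suc k) + ((1-\<alpha>)/(1+\<alpha>)) *\<^sub>R (p (Suc k) - p k))
         = (1+\<alpha>) *\<^sub>R p (Suc k) + ((1+\<alpha>) * ((1-\<alpha>)/(1+\<alpha>))) *\<^sub>R (p (Suc k) - p k)"
        by (simp only: scaleR_add_right scaleR_scaleR)
      also have "\<dots> = (1+\<alpha>) *\<^sub>R p (Suc k) + (1-\<alpha>) *\<^sub>R (p (Suc k) - p k)" using b1 by simp
      finally show ?thesis by (simp add: algebra_simps)
    qed
    also have "\<dots> = w k - (1/L) *\<^sub>R gr (w k) - (1-\<alpha>) *\<^sub>R p k" using ps by simp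
    also have "\<dots> = \<alpha> *\<^sub>R ((1-\<alpha>) *\<^sub>R v k + \<alpha> *\<^sub>R w k - (\<alpha>/\<kappa>) *\<^sub>R gr (w k))"
    proof -
      have "\<alpha> *\<^sub>R ((1-\<alpha>) *\<^sub>R v k) = (1-\<alpha>) *\<^sub>R (\<alpha> *\<^sub>R v k)" by simp
      also have "\<dots> = (1-\<alpha>) *\<^sub>R ((1+\<alpha>) *\<^sub>R w k - p k)" using av by simp
      finally have h: "\<alpha> *\<^sub>R ((1-\<alpha>) *\<^sub>R v k) = ((1-\<alpha>)*(1+\<alpha>)) *\<^sub>R w k - (1-\<alpha>) *\<^sub>R p k"
        by (simp add: scaleR_diff_right)
      have h2: "\<alpha> *\<^sub>R ((\<alpha>/\<kappa>) *\<^sub>R gr (w k)) = (1/L) *\<^sub>R gr (w k)"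
        using aL by (simp add: power2_eq_square)
      have h3: "(1-\<alpha>)*(1+\<alpha>) + \<alpha>*\<alpha> = 1" by (simp add: algebra_simps)
      have "\<alpha> *\<^sub>R ((1-\<alpha>) *\<^sub>R v k + \<alpha> *\<^sub>R w k - (\<alpha>/\<kappa>) *\<^sub>R gr (w k))
          = ((1-\<alpha>)*(1+\<alpha>)) *\<^sub>R w k - (1-\<alpha>) *\<^sub>R p k + (\<alpha>*\<alpha>) *\<^sub>R w k - (1/L) *\<^sub>R gr (w k)"
        using h h2 by (simp add: scaleR_diff_right scaleR_add_right)
      also have "\<dots> = ((1-\<alpha>)*(1+\<alpha>) + \<alpha>*\<alpha>) *\<^sub>R w k - (1-\<alpha>) *\<^sub>R p k - (1/L) *\<^sub>R gr (w k)"
        by (simp add: scaleR_add_left algebra_simps)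
      also have "\<dots> = w k - (1/L) *\<^sub>R gr (w k) - (1-\<alpha>) *\<^sub>R p k" using h3 by simp
      finally show ?thesis by simp
    qed
    finally show ?thesis using a0 by simp
  qed
  define E where "E k = \<phi> (p k) - \<phi> x + \<kappa>/2*(norm (v k - x))\<^sup>2" for k
  have Estep: "E (Suc k) \<le> (1-\<alpha>) * E k" for k
  proof -
    define y where "y = w k"
    define g where "g = gr y"
    define a where "a = (1-\<alpha>) *\<^sub>R (v k - x) + \<alpha> *\<^sub>R (y - x)"
    have v1: "v (Suc k) - x = a - (\<alpha>/\<kappa>) *\<^sub>R g"
      unfolding a_def g_def y_def vstep by (simp add: algebra_simps)
    have n1: "(norm (v (Suc k) - x))\<^sup>2 = (norm a)\<^sup>2 - 2*(\<alpha>/\<kappa>)*inner g a + (\<alpha>/\<kappa>)\<^sup>2 * (norm g)\<^sup>2"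
      unfolding v1 by (rule norm_sub_scale)
    have k1: "\<kappa>/2 * (2*(\<alpha>/\<kappa>)*inner g a) = \<alpha> * inner g a" using kp by simp
    have k2: "\<kappa>/2 * ((\<alpha>/\<kappa>)\<^sup>2 * (norm g)\<^sup>2) = (norm g)\<^sup>2 / (2*L)"
    proof -
      have "(\<alpha>/\<kappa>)\<^sup>2 = (\<kappa>/L) / \<kappa>\<^sup>2" using a2 by (simp add: power_divide)
      also have "\<dots> = 1/(L*\<kappa>)" using kp by (simp add: power2_eq_square)
      finally have "(\<alpha>/\<kappa>)\<^sup>2 = 1/(L*\<kappa>)" .
      then show ?thesis using kp by simp
    qed
    have EE: "E (Suc k) = \<phi> (p (Suc k)) - \<phi> x + (\<kappa>/2*(norm a)\<^sup>2 - \<alpha> * inner g a + (norm g)\<^sup>2 / (2*L))"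
      unfolding E_def n1 using k1 k2 by (simp add: algebra_simps)
    have pa: "\<phi> (p (Suc k)) \<le> \<phi> y - (norm g)\<^sup>2 / (2*L)"
    proof -
      have u1: "\<phi> (p (Suc k)) \<le> \<phi> y + inner g (p (Suc k) - y) + L/2*(norm (p (Suc k) - y))\<^sup>2"
        unfolding g_def by (rule up)
      have pe: "p (Suc k) - y = - ((1/L) *\<^sub>R g)" by (simp add: ps y_def g_def)
      have e1: "inner g (p (Suc k) - y) = - (1/L) * (norm g)\<^sup>2" unfolding pe
        by (simp add: power2_norm_eq_inner)
      have e2: "(norm (p (Suc k) - y))\<^sup>2 = (1/L)\<^sup>2*(norm g)\<^sup>2" unfolding pe
        using Lp by (simp add: power_divide)
      have "\<phi> (p (Suc k)) \<le> \<phi> y - (1/L) * (norm g)\<^sup>2 + L/2*((1/L)\<^sup>2*(norm g)\<^sup>2)"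
        using u1 unfolding e1 e2 by simp
      moreover have "(1/L) * (norm g)\<^sup>2 - L/2*((1/L)\<^sup>2*(norm g)\<^sup>2) = (norm g)\<^sup>2 / (2*L)"
        using Lp by (simp add: power2_eq_square field_simps)
      ultimately show ?thesis by linarith
    qed
    have idv: "\<alpha> *\<^sub>R a = - ((1-\<alpha>) *\<^sub>R (p k - y) + \<alpha> *\<^sub>R (x - y))"
    proof -
      have "\<alpha> *\<^sub>R a = (1-\<alpha>) *\<^sub>R (\<alpha> *\<^sub>R v k) - ((1-\<alpha>)*\<alpha>) *\<^sub>R x + (\<alpha>*\<alpha>) *\<^sub>R (y - x)"
        by (simp add: a_def algebra_simps)
      also have "\<dots> = (1-\<alpha>) *\<^sub>R ((1+\<alpha>) *\<^sub>R y - p k) - ((1-\<alpha>)*\<alpha>) *\<^sub>R x + (\<alpha>*\<alpha>) *\<^sub>R (y - x)"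
        using av[of k] by (simp add: y_def)
      also have "\<dots> = ((1-\<alpha>)*(1+\<alpha>) + \<alpha>*\<alpha>) *\<^sub>R y - (1-\<alpha>) *\<^sub>R p k - ((1-\<alpha>)*\<alpha> + \<alpha>*\<alpha>) *\<^sub>R x"
        by (simp add: algebra_simps)
      also have "\<dots> = y - (1-\<alpha>) *\<^sub>R p k - \<alpha> *\<^sub>R x" by (simp add: algebra_simps)
      also have "\<dots> = - ((1-\<alpha>) *\<^sub>R (p k - y) + \<alpha> *\<^sub>R (x - y))" by (simp add: algebra_simps)
      finally show ?thesis .
    qed
    have iga: "\<alpha> * inner g a = -(1-\<alpha>) * inner g (p k - y) - \<alpha> * inner g (x - y)"
    proof -
      have "\<alpha> * inner g a = inner g (\<alpha> *\<^sub>R a)" by simp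
      also have "\<dots> = -(1-\<alpha>) * inner g (p k - y) - \<alpha> * inner g (x - y)" unfolding idv
        by (simp only: inner_minus_right inner_add_right inner_scaleR_right)
      finally show ?thesis .
    qed
    have na: "(norm a)\<^sup>2 \<le> (1-\<alpha>) * (norm (v k - x))\<^sup>2 + \<alpha> * (norm (y - x))\<^sup>2"
    proof -
      have "(norm a)\<^sup>2 = (1-\<alpha>)*(norm (v k - x))\<^sup>2 + (1-(1-\<alpha>))*(norm (y - x))\<^sup>2 - (1-\<alpha>)*(1-(1-\<alpha>))*(norm ((v k - x) - (y - x)))\<^sup>2"
        unfolding a_def using norm_conv_id[of "1-\<alpha>" "v k - x" "y - x"] by simp
      moreover have "0 \<le> (1-\<alpha>)*(1-(1-\<alpha>))*(norm ((v k - x) - (y - x)))\<^sup>2" using a0 a1 by simp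
      ultimately show ?thesis by simp
    qed
    have b: "\<phi> y + inner g (p k - y) \<le> \<phi> (p k)"
    proof -
      have "0 \<le> \<kappa>/2*(norm (p k - y))\<^sup>2" using kp by simp
      then show ?thesis using lo[of y "p k"] unfolding g_def by linarith
    qed
    have c: "\<phi> y + inner g (x - y) + \<kappa>/2*(norm (x - y))\<^sup>2 \<le> \<phi> x"
      using lo[of y x] unfolding g_def .
    have "E (Suc k) \<le> (1-\<alpha>)*(\<phi> (p k) - \<phi> x + \<kappa>/2*(norm (v k - x))\<^sup>2)"
      unfolding EE
    proof (rule arith_step[OF _ _ _ pa iga na b])
      show "0 \<le> \<alpha>" "\<alpha> \<le> 1" "0 \<le> \<kappa>" using a0 a1 kp by auto
      show "\<phi> y + inner g (x - y) + \<kappa>/2*(norm (y - x))\<^sup>2 \<le> \<phi> x" using c by (simp add: norm_minus_commute)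
    qed
    then show ?thesis by (simp add: E_def)
  qed
  have Ek: "E k \<le> (1-\<alpha>)^k * E 0" for k
  proof (induction k)
    case (Suc k)
    have "E (Suc k) \<le> (1-\<alpha>) * E k" by (rule Estep)
    also have "\<dots> \<le> (1-\<alpha>) * ((1-\<alpha>)^k * E 0)" using Suc a1 by (intro mult_left_mono) auto
    finally show ?case by simp
  qed simp
  have E0: "E 0 = \<phi> 0 - \<phi> x + \<kappa>/2*(norm x)\<^sup>2" by (simp add: E_def v_def p0 w0)
  have "\<phi> (p k) - \<phi> x \<le> E k" using kp by (simp add: E_def)
  also have "\<dots> \<le> (1-\<alpha>)^k * E 0" by (rule Ek)
  finally show ?thesis unfolding E0 \<alpha>_def by (simp add: mult.commute)
qed

lemma phi_min:
  fixes \<phi> :: "'b::{real_inner,complete_space} \<Rightarrow> real" and gr :: "'b \<Rightarrow> 'b"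
  assumes kp: "\<kappa> > 0"
    and lo: "\<And>x y. \<phi> x + inner (gr x) (y - x) + \<kappa>/2*(norm (y - x))\<^sup>2 \<le> \<phi> y"
  shows "\<exists>p. \<forall>q. \<phi> p \<le> \<phi> q"
proof -
  define F where "F = (\<lambda>x. ereal (\<phi> x))"
  have sc: "scvx \<kappa> F" unfolding scvx_def
  proof (intro conjI allI impI)
    fix x :: 'b show "F x \<noteq> -\<infinity>" by (simp add: F_def)
  next
    fix x y :: 'b and t :: real assume t: "0 < t" "t < 1"
    define z where "z = t *\<^sub>R x + (1-t) *\<^sub>R y"
    define D where "D = (norm (x - y))\<^sup>2"
    have l1: "\<phi> z + inner (gr z) (x - z) + \<kappa>/2*(norm (x - z))\<^sup>2 \<le> \<phi> x" by (rule lo)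
    have l2: "\<phi> z + inner (gr z) (y - z) + \<kappa>/2*(norm (y - z))\<^sup>2 \<le> \<phi> y" by (rule lo)
    have xz: "x - z = (1-t) *\<^sub>R (x - y)" by (simp add: z_def algebra_simps)
    have yz: "y - z = (-t) *\<^sub>R (x - y)" by (simp add: z_def algebra_simps)
    have n1: "(norm (x - z))\<^sup>2 = (1-t)\<^sup>2 * D" unfolding xz D_def using t by (simp add: power_mult_distrib)
    have n2: "(norm (y - z))\<^sup>2 = t\<^sup>2 * D" unfolding yz D_def by (simp add: power_mult_distrib)
    have i1: "inner (gr z) (x - z) = (1-t) * inner (gr z) (x - y)" unfolding xz by simp
    have i2: "inner (gr z) (y - z) = - t * inner (gr z) (x - y)" unfolding yz by simp
    define I where "I = inner (gr z) (x - y)"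
    have h1: "t * (\<phi> z + (1-t) * I + \<kappa>/2*((1-t)\<^sup>2 * D)) \<le> t * \<phi> x"
      using l1 t unfolding n1 i1 I_def by (intro mult_left_mono) auto
    have h2: "(1-t) * (\<phi> z - t * I + \<kappa>/2*(t\<^sup>2 * D)) \<le> (1-t) * \<phi> y"
      using l2 t unfolding n2 i2 I_def by (intro mult_left_mono) auto
    have "\<phi> z \<le> t * \<phi> x + (1-t) * \<phi> y - \<kappa>/2*t*(1-t)*D"
      using h1 h2 by (simp add: algebra_simps power2_eq_square) argo
    then show "F (t *\<^sub>R x + (1 - t) *\<^sub>R y) \<le> ereal (t * real_of_ereal (F x) + (1 - t) * real_of_ereal (F y) - \<kappa> / 2 * t * (1 - t) * (norm (x - y))\<^sup>2)"
      by (simp add: F_def z_def D_def)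
  qed
  have lsc: "lsc_fun F" unfolding lsc_fun_def closed_sequential_limits
  proof (intro allI impI, elim conjE)
    fix c :: real and X and l :: 'b assume X: "\<forall>n. X n \<in> {x. F x \<le> ereal c}" and lim: "X \<longlonglongrightarrow> l"
    have b: "\<phi> l \<le> c + norm (gr l) * norm (X n - l)" for n
    proof -
      have "\<phi> l + inner (gr l) (X n - l) + \<kappa>/2*(norm (X n - l))\<^sup>2 \<le> \<phi> (X n)" by (rule lo)
      moreover have "0 \<le> \<kappa>/2*(norm (X n - l))\<^sup>2" using kp by simp
      moreover have "- (norm (gr l) * norm (X n - l)) \<le> inner (gr l) (X n - l)"
        using Cauchy_Schwarz_ineq2[of "gr l" "X n - l"] by linarith
      moreover have "\<phi> (X n) \<le> c" using X by (simp add: F_def)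
      ultimately show ?thesis by linarith
    qed
    have "(\<lambda>n. norm (X n - l)) \<longlonglongrightarrow> 0" using lim by (simp add: LIM_zero tendsto_norm_zero)
    then have "(\<lambda>n. c + norm (gr l) * norm (X n - l)) \<longlonglongrightarrow> c + norm (gr l) * 0"
      by (intro tendsto_intros)
    then have "\<phi> l \<le> c" using b by (simp add: LIMSEQ_le_const)
    then show "l \<in> {x. F x \<le> ereal c}" by (simp add: F_def)
  qed
  obtain p where "F p \<noteq> \<infinity>" "\<forall>q. F p \<le> F q" using min_ex[OF sc kp lsc, of 0 "\<phi> 0"] by (auto simp: F_def)
  then show ?thesis by (auto simp: F_def)
qed

lemma stationary:
  fixes \<phi> :: "'b::real_inner \<Rightarrow> real" and gr :: "'b \<Rightarrow> 'b"
  assumes Lp: "L > 0"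
    and up: "\<And>x y. \<phi> y \<le> \<phi> x + inner (gr x) (y - x) + L/2*(norm (y - x))\<^sup>2"
    and mn: "\<And>q. \<phi> p \<le> \<phi> q"
  shows "gr p = 0"
proof -
  define q where "q = p - (1/L) *\<^sub>R gr p"
  have u1: "\<phi> q \<le> \<phi> p + inner (gr p) (q - p) + L/2*(norm (q - p))\<^sup>2" by (rule up)
  have e1: "inner (gr p) (q - p) = - (1/L) * (norm (gr p))\<^sup>2" by (simp add: q_def power2_norm_eq_inner)
  have e2: "(norm (q - p))\<^sup>2 = (1/L)\<^sup>2*(norm (gr p))\<^sup>2" using Lp by (simp add: q_def power_divide)
  have e3: "L/2*((1/L)\<^sup>2*(norm (gr p))\<^sup>2) = (1/L) * (norm (gr p))\<^sup>2 / 2" using Lp by (simp add: power2_eq_square)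
  have "\<phi> p \<le> \<phi> q" by (rule mn)
  then have "(1/L) * (norm (gr p))\<^sup>2 / 2 \<le> 0" using u1 unfolding e1 e2 e3 by linarith
  then have "(norm (gr p))\<^sup>2 \<le> 0" using Lp by (simp add: field_simps)
  then show ?thesis by simp
qed

lemma XF:
  fixes f :: "'a::{real_inner,complete_space} \<Rightarrow> ereal" and Astar :: "'m \<Rightarrow> 'a"
  assumes rp: "\<rho> > 0" and fp: "proper_fun f" and fc: "convex_fun f" and fl: "lsc_fun f"
  shows "\<exists>fX. f (xf \<rho> f Astar p) = ereal fX \<and>
    (\<forall>y b. f y = ereal b \<longrightarrow> fX + \<rho>/2*(norm (xf \<rho> f Astar p))\<^sup>2 - inner (Astar p) (xf \<rho> f Astar p)
        + \<rho>/2*(norm (y - xf \<rho> f Astar p))\<^sup>2 \<le> b + \<rho>/2*(norm y)\<^sup>2 - inner (Astar p) y)"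
proof -
  define q where "q = Astar p"
  define \<psi> where "\<psi> = (\<lambda>y. \<rho>/2*(norm y)\<^sup>2 + inner (-q) y + 0)"
  define H where "H = (\<lambda>y. f y + ereal (\<psi> y))"
  have nm: "\<And>x. f x \<noteq> -\<infinity>" using fp unfolding proper_fun_def by auto
  have sc: "scvx (0 + \<rho>) H" unfolding H_def
    by (rule scvx_add[OF scvx_conv[OF fc fp]]) (unfold \<psi>_def, rule quad_sconv)
  have lsc: "lsc_fun H" unfolding H_def
    by (rule lsc_add[OF fl _ nm]) (unfold \<psi>_def, intro continuous_intros)
  obtain x0 where "f x0 \<noteq> \<infinity>" using fp unfolding proper_fun_def by auto
  then obtain a0 where "f x0 = ereal a0" using nm[of x0] by (cases "f x0") auto
  then have H0: "H x0 = ereal (a0 + \<psi> x0)" by (simp add: H_def)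
  obtain x where x: "H x \<noteq> \<infinity>" "\<forall>y. H x \<le> H y" using min_ex[OF sc _ lsc H0] rp by auto
  obtain fX where fX: "f x = ereal fX" using x(1) nm[of x] by (cases "f x") (auto simp: H_def)
  have Hx: "H x = ereal (fX + \<psi> x)" using fX by (simp add: H_def)
  have qgx: "ereal (fX + \<psi> x + (0+\<rho>)/2 * (norm (y - x))\<^sup>2) \<le> H y" for y
    by (rule qg[OF sc Hx]) (use x(2) in auto)
  have grow: "fX + \<psi> x + \<rho>/2 * (norm (y - x))\<^sup>2 \<le> b + \<psi> y" if "f y = ereal b" for y b
    using qgx[of y] that by (simp add: H_def)
  define P where "P = (\<lambda>x. \<forall>y. ereal (inner q y - \<rho> / 2 * (norm y)\<^sup>2) - f y
        \<le> ereal (inner q x - \<rho> / 2 * (norm x)\<^sup>2) - f x)"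
  have Px: "P x" unfolding P_def
  proof
    fix y show "ereal (inner q y - \<rho> / 2 * (norm y)\<^sup>2) - f y \<le> ereal (inner q x - \<rho> / 2 * (norm x)\<^sup>2) - f x"
    proof (cases "f y")
      case (real b)
      have "0 \<le> \<rho>/2 * (norm (y - x))\<^sup>2" using rp by simp
      then have "fX + \<psi> x \<le> b + \<psi> y" using grow[OF real] by linarith
      then show ?thesis using real fX by (simp add: \<psi>_def)
    qed (use nm in auto)
  qed
  have uniq: "x' = x" if "P x'" for x'
  proof -
    have "ereal (inner q x - \<rho> / 2 * (norm x)\<^sup>2) - f x \<le> ereal (inner q x' - \<rho> / 2 * (norm x')\<^sup>2) - f x'"
      using that unfolding P_def by blast
    then obtain b where b: "f x' = ereal b" "inner q x - \<rho> / 2 * (norm x)\<^sup>2 - fX \<le> inner q x' - \<rho> / 2 * (norm x')\<^sup>2 - b"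
      using fX nm[of x'] by (cases "f x'") auto
    have "fX + \<psi> x + \<rho>/2 * (norm (x' - x))\<^sup>2 \<le> b + \<psi> x'" by (rule grow[OF b(1)])
    then have "\<rho>/2 * (norm (x' - x))\<^sup>2 \<le> 0" using b(2) by (simp add: \<psi>_def)
    then have "(norm (x' - x))\<^sup>2 \<le> 0" using rp by (simp add: mult_le_0_iff)
    then show ?thesis by simp
  qed
  have "(THE x. P x) = x" by (rule the_equality[where P=P, OF Px uniq])
  then have xfx: "xf \<rho> f Astar p = x" unfolding xf_def P_def q_def .
  have G: "\<forall>y b. f y = ereal b \<longrightarrow> fX + \<rho>/2*(norm x)\<^sup>2 - inner q x + \<rho>/2*(norm (y - x))\<^sup>2 \<le> b + \<rho>/2*(norm y)\<^sup>2 - inner q y"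
  proof (intro allI impI)
    fix y b assume "f y = ereal b"
    from grow[OF this] show "fX + \<rho>/2*(norm x)\<^sup>2 - inner q x + \<rho>/2*(norm (y - x))\<^sup>2 \<le> b + \<rho>/2*(norm y)\<^sup>2 - inner q y"
      by (simp add: \<psi>_def)
  qed
  show ?thesis unfolding xfx q_def[symmetric] using fX G by blast
qed

lemma XG:
  fixes g :: "'b::{real_inner,complete_space} \<Rightarrow> ereal"
  assumes mp: "\<mu> > 0" and gp: "proper_fun g" and gs: "strongly_convex_fun \<mu> g" and gl: "lsc_fun g"
  shows "\<exists>gX. g (xg g p) = ereal gX \<and>
    (\<forall>y b. g y = ereal b \<longrightarrow> inner p (xg g p) + gX + \<mu>/2*(norm (y - xg g p))\<^sup>2 \<le> inner p y + b)"
proof -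
  define \<psi> where "\<psi> = (\<lambda>y. 0/2*(norm y)\<^sup>2 + inner p y + 0)"
  define H where "H = (\<lambda>y. g y + ereal (\<psi> y))"
  have nm: "\<And>x. g x \<noteq> -\<infinity>" using gp unfolding proper_fun_def by auto
  have sc: "scvx (\<mu> + 0) H" unfolding H_def
    by (rule scvx_add[OF scvx_sconv[OF gs gp]]) (unfold \<psi>_def, rule quad_sconv)
  have lsc: "lsc_fun H" unfolding H_def
    by (rule lsc_add[OF gl _ nm]) (unfold \<psi>_def, intro continuous_intros)
  obtain x0 where "g x0 \<noteq> \<infinity>" using gp unfolding proper_fun_def by auto
  then obtain a0 where "g x0 = ereal a0" using nm[of x0] by (cases "g x0") auto
  then have H0: "H x0 = ereal (a0 + \<psi> x0)" by (simp add: H_def)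
  obtain x where x: "H x \<noteq> \<infinity>" "\<forall>y. H x \<le> H y" using min_ex[OF sc _ lsc H0] mp by auto
  obtain gX where gX: "g x = ereal gX" using x(1) nm[of x] by (cases "g x") (auto simp: H_def)
  have Hx: "H x = ereal (gX + \<psi> x)" using gX by (simp add: H_def)
  have qgx: "ereal (gX + \<psi> x + (\<mu>+0)/2 * (norm (y - x))\<^sup>2) \<le> H y" for y
    by (rule qg[OF sc Hx]) (use x(2) in auto)
  have grow: "inner p x + gX + \<mu>/2 * (norm (y - x))\<^sup>2 \<le> inner p y + b" if "g y = ereal b" for y b
    using qgx[of y] that by (simp add: H_def \<psi>_def)
  have "xg g p = x" unfolding xg_def
  proof (rule the_equality)
    show "\<forall>y. ereal (inner p x) + g x \<le> ereal (inner p y) + g y"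
    proof
      fix y show "ereal (inner p x) + g x \<le> ereal (inner p y) + g y"
        using x(2)[rule_format, of y] by (simp add: H_def \<psi>_def add.commute)
    qed
  next
    fix x' assume a: "\<forall>y. ereal (inner p x') + g x' \<le> ereal (inner p y) + g y"
    then have "ereal (inner p x') + g x' \<le> ereal (inner p x) + g x" by blast
    then obtain b where b: "g x' = ereal b" "inner p x' + b \<le> inner p x + gX"
      using gX nm[of x'] by (cases "g x'") auto
    have "inner p x + gX + \<mu>/2 * (norm (x' - x))\<^sup>2 \<le> inner p x' + b" by (rule grow[OF b(1)])
    then have "\<mu>/2 * (norm (x' - x))\<^sup>2 \<le> 0" using b(2) by simp
    then have "(norm (x' - x))\<^sup>2 \<le> 0" using mp by (simp add: mult_le_0_iff)
    then show "x' = x" by simp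
  qed
  then show ?thesis using gX grow by blast
qed

lemma amgm:
  fixes a b \<rho> :: real assumes "\<rho> > 0"
  shows "a * b \<le> a\<^sup>2/(2*\<rho>) + \<rho>/2*b\<^sup>2"
proof -
  have "0 \<le> (a - \<rho>*b)\<^sup>2" by simp
  then have "2*\<rho>*(a*b) \<le> a\<^sup>2 + \<rho>\<^sup>2*b\<^sup>2" by (simp add: power2_eq_square algebra_simps)
  then have "(2*\<rho>*(a*b))/(2*\<rho>) \<le> (a\<^sup>2 + \<rho>\<^sup>2*b\<^sup>2)/(2*\<rho>)" using assms by (intro divide_right_mono) auto
  moreover have "(2*\<rho>*(a*b))/(2*\<rho>) = a*b" using assms by simp
  moreover have "(a\<^sup>2 + \<rho>\<^sup>2*b\<^sup>2)/(2*\<rho>) = a\<^sup>2/(2*\<rho>) + \<rho>/2*b\<^sup>2" using assms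
    by (simp add: add_divide_distrib power2_eq_square)
  ultimately show ?thesis by simp
qed

lemma conj_bounds_f:
  fixes A :: "'a::real_inner \<Rightarrow> 'b::real_inner" and X :: "'b \<Rightarrow> 'a" and fr :: "'b \<Rightarrow> real"
  assumes A: "bounded_linear A" and rp: "\<rho> > 0"
    and grow: "\<And>p q. fr p + \<rho>/2*(norm (X p))\<^sup>2 - inner p (A (X p)) + \<rho>/2*(norm (X q - X p))\<^sup>2
                   \<le> fr q + \<rho>/2*(norm (X q))\<^sup>2 - inner p (A (X q))"
    and Phi: "\<And>p. \<Phi> p = inner p (A (X p)) - \<rho>/2*(norm (X p))\<^sup>2 - fr p"
  shows "\<Phi> p + inner (q - p) (A (X p)) \<le> \<Phi> q"
    and "\<Phi> q \<le> \<Phi> p + inner (q - p) (A (X p)) + (onorm A)\<^sup>2/(2*\<rho>) * (norm (q - p))\<^sup>2"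
proof -
  have "0 \<le> \<rho>/2*(norm (X p - X q))\<^sup>2" using rp by simp
  then show "\<Phi> p + inner (q - p) (A (X p)) \<le> \<Phi> q"
    using grow[of q p] unfolding Phi by (simp add: inner_diff_left)
next
  interpret bounded_linear A by fact
  have g: "fr p + \<rho>/2*(norm (X p))\<^sup>2 - inner p (A (X p)) + \<rho>/2*(norm (X q - X p))\<^sup>2
                   \<le> fr q + \<rho>/2*(norm (X q))\<^sup>2 - inner p (A (X q))" by (rule grow)
  have c: "inner (q - p) (A (X q) - A (X p)) \<le> norm (q - p) * (onorm A * norm (X q - X p))"
  proof -
    have "inner (q - p) (A (X q) - A (X p)) \<le> norm (q - p) * norm (A (X q - X p))"
      using Cauchy_Schwarz_ineq2[of "q - p" "A (X q - X p)"] by (simp add: diff)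
    also have "\<dots> \<le> norm (q - p) * (onorm A * norm (X q - X p))"
      by (intro mult_left_mono onorm[OF A]) auto
    finally show ?thesis .
  qed
  have am: "(onorm A * norm (q - p)) * norm (X q - X p) \<le> (onorm A * norm (q - p))\<^sup>2/(2*\<rho>) + \<rho>/2*(norm (X q - X p))\<^sup>2"
    by (rule amgm[OF rp])
  have e: "(onorm A * norm (q - p))\<^sup>2/(2*\<rho>) = (onorm A)\<^sup>2/(2*\<rho>) * (norm (q - p))\<^sup>2"
    by (simp add: power_mult_distrib)
  have i: "inner (q - p) (A (X q)) = inner (q - p) (A (X p)) + inner (q - p) (A (X q) - A (X p))"
    by (simp add: inner_diff_right)
  show "\<Phi> q \<le> \<Phi> p + inner (q - p) (A (X p)) + (onorm A)\<^sup>2/(2*\<rho>) * (norm (q - p))\<^sup>2"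
    unfolding Phi using g c am e i by (simp add: inner_diff_left algebra_simps)
qed

lemma conj_bounds_g:
  fixes Y :: "'b::real_inner \<Rightarrow> 'b" and gr :: "'b \<Rightarrow> real"
  assumes mp: "\<mu> > 0"
    and grow: "\<And>p q. inner p (Y p) + gr p + \<mu>/2*(norm (Y q - Y p))\<^sup>2 \<le> inner p (Y q) + gr q"
    and Psi: "\<And>p. \<Psi> p = - inner p (Y p) - gr p"
  shows "\<Psi> p - inner (q - p) (Y p) \<le> \<Psi> q"
    and "\<Psi> q \<le> \<Psi> p - inner (q - p) (Y p) + 1/(2*\<mu>) * (norm (q - p))\<^sup>2"
proof -
  have "0 \<le> \<mu>/2*(norm (Y p - Y q))\<^sup>2" using mp by simp
  then show "\<Psi> p - inner (q - p) (Y p) \<le> \<Psi> q"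
    using grow[of q p] unfolding Psi by (simp add: inner_diff_left)
next
  have g: "inner p (Y p) + gr p + \<mu>/2*(norm (Y q - Y p))\<^sup>2 \<le> inner p (Y q) + gr q" by (rule grow)
  have c: "- inner (q - p) (Y q - Y p) \<le> norm (q - p) * norm (Y q - Y p)"
    using Cauchy_Schwarz_ineq2[of "q - p" "Y q - Y p"] by linarith
  have am: "norm (q - p) * norm (Y q - Y p) \<le> (norm (q - p))\<^sup>2/(2*\<mu>) + \<mu>/2*(norm (Y q - Y p))\<^sup>2"
    by (rule amgm[OF mp])
  have i: "inner (q - p) (Y q) = inner (q - p) (Y p) + inner (q - p) (Y q - Y p)"
    by (simp add: inner_diff_right)
  show "\<Psi> q \<le> \<Psi> p - inner (q - p) (Y p) + 1/(2*\<mu>) * (norm (q - p))\<^sup>2"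
    unfolding Psi using g c am i by (simp add: inner_diff_left algebra_simps)
qed

theorem mainTheorem5:
  fixes f :: "'a::{real_inner, complete_space} \<Rightarrow> ereal"
    and g :: "real^'m \<Rightarrow> ereal"
    and A :: "'a \<Rightarrow> real^'m"
    and Astar :: "real^'m \<Rightarrow> 'a"
    and \<mu> R \<epsilon> \<rho> \<kappa> :: real
    and pstar :: "real^'m"
    and p w :: "nat \<Rightarrow> real^'m"
  assumes f_proper: "proper_fun f" and f_convex: "convex_fun f" and f_lsc: "lsc_fun f"
    and f_bdd: "bounded (edom f)"
    and g_proper: "proper_fun g" and g_lsc: "lsc_fun g"
    and mu_pos: "\<mu> > 0" and g_sc: "strongly_convex_fun \<mu> g"
    and A_lin: "bounded_linear A"
    and Astar_adj: "\<And>q x. inner (Astar q) x = inner q (A x)"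
    and dom_inter: "A ` edom f \<inter> edom g \<noteq> {}"
    and pstar_opt: "\<And>q. theta f g Astar pstar \<le> theta f g Astar q"
    and R_pos: "R > 0" and pstar_R: "norm pstar \<le> R"
    and Df_pos: "Dconst f > 0"
    and eps_pos: "\<epsilon> > 0"
    and rho_def: "\<rho> = \<epsilon> / (3 * Dconst f)"
    and kappa_def: "\<kappa> = 2 * \<epsilon> / (3 * R\<^sup>2)"
    and p0: "p 0 = 0" and w0: "w 0 = 0"
    and p_step: "\<And>k. p (Suc k) = w k - (1 / Lconst (onorm A) \<mu> \<rho> \<kappa>) *\<^sub>R
                   (A (xf \<rho> f Astar (w k)) - xg g (w k) + \<kappa> *\<^sub>R w k)"
    and w_step: "\<And>k. w (Suc k) = p (Suc k) +
                   ((sqrt (Lconst (onorm A) \<mu> \<rho> \<kappa>) - sqrt \<kappa>) /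
                    (sqrt (Lconst (onorm A) \<mu> \<rho> \<kappa>) + sqrt \<kappa>)) *\<^sub>R (p (Suc k) - p k)"
  shows "\<forall>k. norm (A (xf \<rho> f Astar (p k)) - xg g (p k))
           \<le> 2 * sqrt (Lconst (onorm A) \<mu> \<rho> \<kappa> *
                   (real_of_ereal (theta f g Astar 0) - real_of_ereal (theta f g Astar pstar) + \<epsilon> / 3))
               * exp (- (real k / 2) * sqrt (\<kappa> / Lconst (onorm A) \<mu> \<rho> \<kappa>))
             + 4 * sqrt 2 * \<epsilon> / (3 * R)"
proof -
  have rp: "\<rho> > 0" using rho_def Df_pos eps_pos by simp
  have kp: "\<kappa> > 0" using kappa_def eps_pos R_pos by simp
  define nA where "nA = onorm A"
  have nA0: "0 \<le> nA" unfolding nA_def by (rule onorm_pos_le[OF A_lin])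
  define LF where "LF = nA\<^sup>2/\<rho> + 1/\<mu>"
  have LFp: "LF > 0" using rp mu_pos nA0 unfolding LF_def by (simp add: add_nonneg_pos)
  define L where "L = Lconst (onorm A) \<mu> \<rho> \<kappa>"
  have LLF: "L = LF + \<kappa>" unfolding L_def Lconst_def LF_def nA_def by simp
  have kL: "\<kappa> < L" using LLF LFp by simp
  have Lp: "L > 0" using kL kp by simp
  have rD: "\<rho> * Dconst f = \<epsilon>/3" using rho_def Df_pos by simp
  define X where "X p = xf \<rho> f Astar p" for p
  define Y where "Y p = xg g p" for p
  define fr where "fr p = real_of_ereal (f (X p))" for p
  define gr where "gr p = real_of_ereal (g (Y p))" for p
  have XF': "f (X p) = ereal (fr p) \<and> (\<forall>y b. f y = ereal b \<longrightarrow> fr p + \<rho>/2*(norm (X p))\<^sup>2 - inner (Astar p) (X p)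
        + \<rho>/2*(norm (y - X p))\<^sup>2 \<le> b + \<rho>/2*(norm y)\<^sup>2 - inner (Astar p) y)" for p
    using XF[OF rp f_proper f_convex f_lsc, of Astar p] unfolding X_def fr_def by auto
  have YG': "g (Y p) = ereal (gr p) \<and> (\<forall>y b. g y = ereal b \<longrightarrow> inner p (Y p) + gr p + \<mu>/2*(norm (y - Y p))\<^sup>2 \<le> inner p y + b)" for p
    using XG[OF mu_pos g_proper g_sc g_lsc, of p] unfolding Y_def gr_def by auto
  have growF: "fr p + \<rho>/2*(norm (X p))\<^sup>2 - inner p (A (X p)) + \<rho>/2*(norm (X q - X p))\<^sup>2
                   \<le> fr q + \<rho>/2*(norm (X q))\<^sup>2 - inner p (A (X q))" for p q
    using XF'[of p, THEN conjunct2, rule_format, OF XF'[of q, THEN conjunct1]] by (simp add: Astar_adj)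
  have growG: "inner p (Y p) + gr p + \<mu>/2*(norm (Y q - Y p))\<^sup>2 \<le> inner p (Y q) + gr q" for p q
    using YG'[of p, THEN conjunct2, rule_format, OF YG'[of q, THEN conjunct1]] .
  define \<Phi> where "\<Phi> p = inner p (A (X p)) - \<rho>/2*(norm (X p))\<^sup>2 - fr p" for p
  define \<Psi> where "\<Psi> p = - inner p (Y p) - gr p" for p
  define Fn where "Fn p = \<Phi> p + \<Psi> p" for p
  define G where "G p = A (X p) - Y p" for p
  have iG: "inner (G p) (q - p) = inner (q - p) (A (X p)) - inner (q - p) (Y p)" for p q
    unfolding G_def by (simp add: inner_diff_left inner_diff_right inner_commute)
  have Flo: "Fn p + inner (G p) (q - p) \<le> Fn q" for p q
    using conj_bounds_f(1)[OF A_lin rp growF \<Phi>_def, of p q] conj_bounds_g(1)[OF mu_pos growG \<Psi>_def, of p q]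
    unfolding Fn_def iG by linarith
  have Fup: "Fn q \<le> Fn p + inner (G p) (q - p) + LF/2*(norm (q - p))\<^sup>2" for p q
  proof -
    have "LF/2*(norm (q - p))\<^sup>2 = (onorm A)\<^sup>2/(2*\<rho>) * (norm (q - p))\<^sup>2 + 1/(2*\<mu>) * (norm (q - p))\<^sup>2"
      unfolding LF_def nA_def by (simp add: algebra_simps)
    then show ?thesis
      using conj_bounds_f(2)[OF A_lin rp growF \<Phi>_def, of q p] conj_bounds_g(2)[OF mu_pos growG \<Psi>_def, of q p]
      unfolding Fn_def iG by linarith
  qed
  define \<phi> where "\<phi> p = Fn p + \<kappa>/2*(norm p)\<^sup>2" for p
  define gg where "gg p = G p + \<kappa> *\<^sub>R p" for p
  have nid: "(norm q)\<^sup>2 = (norm p)\<^sup>2 + 2*inner p (q - p) + (norm (q - p))\<^sup>2" for p q :: "real^'m"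
    unfolding power2_norm_eq_inner by (simp add: inner_diff inner_commute algebra_simps)
  have igg: "inner (gg p) (q - p) = inner (G p) (q - p) + \<kappa> * inner p (q - p)" for p q
    unfolding gg_def by (simp add: inner_add_left)
  have kn: "\<kappa>/2*(norm q)\<^sup>2 = \<kappa>/2*(norm p)\<^sup>2 + \<kappa>*inner p (q - p) + \<kappa>/2*(norm (q - p))\<^sup>2" for p q :: "real^'m"
    by (subst nid[of q p]) (simp add: algebra_simps)
  have plo: "\<phi> p + inner (gg p) (q - p) + \<kappa>/2*(norm (q - p))\<^sup>2 \<le> \<phi> q" for p q
    using Flo[of p q] kn[of q p] unfolding \<phi>_def igg by linarith
  have pup: "\<phi> q \<le> \<phi> p + inner (gg p) (q - p) + L/2*(norm (q - p))\<^sup>2" for p q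
  proof -
    have "L/2*(norm (q - p))\<^sup>2 = LF/2*(norm (q - p))\<^sup>2 + \<kappa>/2*(norm (q - p))\<^sup>2" unfolding LLF by (simp add: algebra_simps)
    then show ?thesis using Fup[of q p] kn[of q p] unfolding \<phi>_def igg by linarith
  qed
  have bddD: "bdd_above ((\<lambda>x. (norm x)\<^sup>2 / 2) ` edom f)"
  proof -
    obtain a where a: "\<forall>x\<in>edom f. norm x \<le> a" using f_bdd unfolding bounded_iff by blast
    have h: "(norm x)\<^sup>2 / 2 \<le> a\<^sup>2 / 2" if "x \<in> edom f" for x
      using a that by (simp add: power_mono)
    show ?thesis by (rule bdd_aboveI2[of "edom f" "\<lambda>x. (norm x)\<^sup>2 / 2" "a\<^sup>2/2"]) (rule h)
  qed
  have Dx: "(norm x)\<^sup>2 / 2 \<le> Dconst f" if "f x = ereal b" for x b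
  proof -
    have "x \<in> edom f" using that by (simp add: edom_def)
    then show ?thesis unfolding Dconst_def by (intro cSup_upper bddD) auto
  qed
  have c1: "ereal (\<Phi> p) \<le> fconj f (Astar p)" for p
    unfolding fconj_def
  proof (rule SUP_upper2[of "X p"])
    have "\<Phi> p \<le> inner (Astar p) (X p) - fr p" using rp by (simp add: \<Phi>_def Astar_adj)
    then show "ereal (\<Phi> p) \<le> ereal (inner (Astar p) (X p)) - f (X p)" using XF'[of p] by simp
  qed simp
  have c2: "fconj f (Astar p) \<le> ereal (\<Phi> p + \<epsilon>/3)" for p
    unfolding fconj_def
  proof (rule SUP_least)
    fix x show "ereal (inner (Astar p) x) - f x \<le> ereal (\<Phi> p + \<epsilon> / 3)"
    proof (cases "f x")
      case (real b)
      have g: "fr p + \<rho>/2*(norm (X p))\<^sup>2 - inner (Astar p) (X p) + \<rho>/2*(norm (x - X p))\<^sup>2 \<le> b + \<rho>/2*(norm x)\<^sup>2 - inner (Astar p) x"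
        using XF'[of p] real by blast
      have "\<rho> * ((norm x)\<^sup>2 / 2) \<le> \<rho> * Dconst f" using Dx[OF real] rp by (intro mult_left_mono) auto
      moreover have "0 \<le> \<rho>/2*(norm (x - X p))\<^sup>2" using rp by simp
      ultimately have "inner (Astar p) x - b \<le> \<Phi> p + \<epsilon>/3" using g rD by (simp add: \<Phi>_def Astar_adj)
      then show ?thesis using real by simp
    next
      case PInf then show ?thesis by simp
    next
      case MInf then show ?thesis using f_proper unfolding proper_fun_def by auto
    qed
  qed
  have c3: "fconj g (-p) = ereal (\<Psi> p)" for p
    unfolding fconj_def
  proof (rule antisym)
    show "(SUP x. ereal (inner (- p) x) - g x) \<le> ereal (\<Psi> p)"
    proof (rule SUP_least)
      fix x show "ereal (inner (- p) x) - g x \<le> ereal (\<Psi> p)"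
      proof (cases "g x")
        case (real b)
        have "inner p (Y p) + gr p + \<mu>/2*(norm (x - Y p))\<^sup>2 \<le> inner p x + b" using YG'[of p] real by blast
        moreover have "0 \<le> \<mu>/2*(norm (x - Y p))\<^sup>2" using mu_pos by simp
        ultimately have "- inner p x - b \<le> \<Psi> p" by (simp add: \<Psi>_def)
        then show ?thesis using real by simp
      next
        case PInf then show ?thesis by simp
      next
        case MInf then show ?thesis using g_proper unfolding proper_fun_def by auto
      qed
    qed
    show "ereal (\<Psi> p) \<le> (SUP x. ereal (inner (- p) x) - g x)"
      by (rule SUP_upper2[of "Y p"]) (use YG'[of p] in \<open>auto simp: \<Psi>_def\<close>)
  qed
  define \<Theta> where "\<Theta> p = real_of_ereal (theta f g Astar p)" for p
  have th: "theta f g Astar p = ereal (\<Theta> p) \<and> Fn p \<le> \<Theta> p \<and> \<Theta> p \<le> Fn p + \<epsilon>/3" for p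
  proof -
    obtain cf where cf: "fconj f (Astar p) = ereal cf" using c1[of p] c2[of p] by (cases "fconj f (Astar p)") auto
    have "\<Phi> p \<le> cf" "cf \<le> \<Phi> p + \<epsilon>/3" using c1[of p] c2[of p] cf by auto
    moreover have "theta f g Astar p = ereal (cf + \<Psi> p)" unfolding theta_def cf c3 by simp
    ultimately show ?thesis unfolding \<Theta>_def Fn_def by simp
  qed
  have popt: "\<Theta> pstar \<le> \<Theta> q" for q using pstar_opt[of q] th[of q] th[of pstar] by simp
  obtain ph where phm: "\<forall>q. \<phi> ph \<le> \<phi> q" using phi_min[OF kp plo] by blast
  have g0: "gg ph = 0" by (rule stationary[OF Lp pup]) (use phm in blast)
  have Gph: "G ph = - (\<kappa> *\<^sub>R ph)"
  proof -
    have "G ph = (G ph + \<kappa> *\<^sub>R ph) - \<kappa> *\<^sub>R ph" by simp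
    also have "\<dots> = - (\<kappa> *\<^sub>R ph)" using g0 unfolding gg_def by simp
    finally show ?thesis .
  qed
  define \<Delta> where "\<Delta> = \<Theta> 0 - \<Theta> pstar + \<epsilon>/3"
  have pR: "(norm pstar)\<^sup>2 \<le> R\<^sup>2" using pstar_R by (simp add: power_mono)
  have kR: "\<kappa>/2*R\<^sup>2 = \<epsilon>/3" using kappa_def R_pos by (simp add: field_simps)
  have B1: "\<phi> ph \<le> \<Theta> pstar + \<kappa>/2*R\<^sup>2"
  proof -
    have "\<phi> ph \<le> \<phi> pstar" using phm by blast
    moreover have "\<kappa>/2*(norm pstar)\<^sup>2 \<le> \<kappa>/2*R\<^sup>2" using pR kp by (intro mult_left_mono) auto
    ultimately show ?thesis using th[of pstar] unfolding \<phi>_def by linarith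
  qed
  have B2: "\<Theta> pstar - \<epsilon>/3 + \<kappa>/2*(norm ph)\<^sup>2 \<le> \<phi> ph"
    using th[of ph] popt[of ph] unfolding \<phi>_def by linarith
  have nph: "(norm ph)\<^sup>2 \<le> 2*R\<^sup>2"
  proof -
    have "\<kappa>/2*(norm ph)\<^sup>2 \<le> \<kappa>/2*(2*R\<^sup>2)" using B1 B2 kR by linarith
    then show ?thesis using kp by (simp add: mult_le_cancel_left)
  qed
  have B3: "\<phi> 0 - \<phi> ph \<le> \<Delta>"
  proof -
    have "\<phi> 0 = Fn 0" by (simp add: \<phi>_def)
    moreover have "0 \<le> \<kappa>/2*(norm ph)\<^sup>2" using kp by simp
    ultimately show ?thesis using th[of 0] B2 unfolding \<Delta>_def by linarith
  qed
  have B4: "\<kappa>/2*(norm ph)\<^sup>2 \<le> \<phi> 0 - \<phi> ph" using plo[of ph 0] g0 by simp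
  have Dnn: "0 \<le> \<Delta>" using popt[of 0] eps_pos unfolding \<Delta>_def by simp
  define \<alpha> where "\<alpha> = sqrt (\<kappa>/L)"
  have a0: "0 \<le> \<alpha>" "\<alpha> \<le> 1" using kp kL Lp by (auto simp: \<alpha>_def)
  have pstep': "p (Suc k) = w k - (1/L) *\<^sub>R gg (w k)" for k
    using p_step[of k] unfolding gg_def G_def X_def Y_def L_def by simp
  have wstep': "w (Suc k) = p (Suc k) + ((sqrt L - sqrt \<kappa>)/(sqrt L + sqrt \<kappa>)) *\<^sub>R (p (Suc k) - p k)" for k
    using w_step[of k] unfolding L_def by simp
  have nes: "\<phi> (p k) - \<phi> ph \<le> (\<phi> 0 - \<phi> ph + \<kappa>/2*(norm ph)\<^sup>2) * (1 - \<alpha>)^k" for k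
    unfolding \<alpha>_def by (rule nest[OF kp kL plo pup p0 w0 pstep' wstep'])
  show ?thesis
  proof
    fix k
    define e where "e = (1 - \<alpha>)^k"
    have e0: "0 \<le> e" using a0 by (simp add: e_def)
    have gap: "\<phi> (p k) - \<phi> ph \<le> 2*\<Delta>*e"
    proof -
      have "(\<phi> 0 - \<phi> ph + \<kappa>/2*(norm ph)\<^sup>2) * e \<le> (2*\<Delta>) * e"
        using B3 B4 e0 by (intro mult_right_mono) auto
      then show ?thesis using nes[of k] unfolding e_def by simp
    qed
    have gnn: "0 \<le> \<phi> (p k) - \<phi> ph" using phm by simp
    have co: "Fn ph + inner (G ph) (p k - ph) + (norm (G (p k) - G ph))\<^sup>2 / (2*LF) \<le> Fn (p k)"
      by (rule cocoer[OF LFp Flo Fup])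
    have iGph: "inner (G ph) (p k - ph) = - (\<kappa> * inner ph (p k - ph))" unfolding Gph by simp
    have "(norm (G (p k) - G ph))\<^sup>2 / (2*LF) \<le> \<phi> (p k) - \<phi> ph"
    proof -
      have "0 \<le> \<kappa>/2*(norm (p k - ph))\<^sup>2" using kp by simp
      then show ?thesis using co kn[of "p k" ph] iGph unfolding \<phi>_def by linarith
    qed
    then have "(norm (G (p k) - G ph))\<^sup>2 \<le> (2*LF) * (\<phi> (p k) - \<phi> ph)"
      using LFp by (simp add: pos_divide_le_eq mult.commute)
    also have "\<dots> \<le> (2*L) * (\<phi> (p k) - \<phi> ph)" using gnn LLF kp by (intro mult_right_mono) auto
    also have "\<dots> \<le> (2*L) * (2*\<Delta>*e)" using gap Lp by (intro mult_left_mono) auto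
    finally have sq: "(norm (G (p k) - G ph))\<^sup>2 \<le> 4 * (L*\<Delta>) * e" by (simp add: algebra_simps)
    have n1: "norm (G (p k) - G ph) \<le> 2 * sqrt (L*\<Delta>) * sqrt e"
    proof -
      have "norm (G (p k) - G ph) \<le> sqrt (4 * (L*\<Delta>) * e)" using sq by (rule real_le_rsqrt)
      also have "\<dots> = 2 * sqrt (L*\<Delta>) * sqrt e" by (simp add: real_sqrt_mult)
      finally show ?thesis .
    qed
    have se: "sqrt e \<le> exp (- (real k / 2) * \<alpha>)"
    proof -
      have "1 - \<alpha> \<le> exp (- \<alpha>)" using exp_ge_add_one_self[of "-\<alpha>"] by simp
      then have "e \<le> exp (- \<alpha>) ^ k" unfolding e_def using a0 by (intro power_mono) auto
      also have "\<dots> = exp (real k * (- \<alpha>))" by (rule exp_of_nat_mult[symmetric])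
      also have "\<dots> = (exp (- (real k / 2) * \<alpha>))\<^sup>2" by (simp add: power2_eq_square exp_add[symmetric])
      finally have "e \<le> (exp (- (real k / 2) * \<alpha>))\<^sup>2" .
      then have "sqrt e \<le> sqrt ((exp (- (real k / 2) * \<alpha>))\<^sup>2)" by (rule real_sqrt_le_mono)
      then show ?thesis by simp
    qed
    have n2: "norm (G ph) \<le> 2 * sqrt 2 * \<epsilon> / (3 * R)"
    proof -
      have "norm ph \<le> sqrt (2*R\<^sup>2)" using nph by (rule real_le_rsqrt)
      also have "\<dots> = sqrt 2 * R" using R_pos by (simp add: real_sqrt_mult)
      finally have "norm ph \<le> sqrt 2 * R" .
      then have "\<kappa> * norm ph \<le> \<kappa> * (sqrt 2 * R)" using kp by (intro mult_left_mono) auto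
      also have "\<kappa> * (sqrt 2 * R) = 2 * sqrt 2 * \<epsilon> / (3 * R)" using R_pos unfolding kappa_def
        by (simp add: power2_eq_square field_simps)
      finally show ?thesis unfolding Gph using kp by simp
    qed
    have "norm (G (p k)) \<le> norm (G (p k) - G ph) + norm (G ph)" using norm_triangle_ineq[of "G (p k) - G ph" "G ph"] by simp
    also have "\<dots> \<le> 2 * sqrt (L*\<Delta>) * exp (- (real k / 2) * \<alpha>) + 2 * sqrt 2 * \<epsilon> / (3 * R)"
    proof -
      have "2 * sqrt (L*\<Delta>) * sqrt e \<le> 2 * sqrt (L*\<Delta>) * exp (- (real k / 2) * \<alpha>)"
        using se Lp Dnn by (intro mult_left_mono) auto
      then show ?thesis using n1 n2 by linarith
    qed
    also have "\<dots> \<le> 2 * sqrt (L*\<Delta>) * exp (- (real k / 2) * \<alpha>) + 4 * sqrt 2 * \<epsilon> / (3 * R)"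
      using eps_pos R_pos by (simp add: divide_right_mono)
    finally show "norm (A (xf \<rho> f Astar (p k)) - xg g (p k))
           \<le> 2 * sqrt (Lconst (onorm A) \<mu> \<rho> \<kappa> *
                   (real_of_ereal (theta f g Astar 0) - real_of_ereal (theta f g Astar pstar) + \<epsilon> / 3))
               * exp (- (real k / 2) * sqrt (\<kappa> / Lconst (onorm A) \<mu> \<rho> \<kappa>))
             + 4 * sqrt 2 * \<epsilon> / (3 * R)"
      unfolding G_def X_def Y_def \<Delta>_def \<Theta>_def \<alpha>_def L_def .
  qed
qed

end
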